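(* For every $n\ge1$ and every essential lattice congruence $R\in\mathcal C_n^*$, the minimum degree of the quotient graph $Q_R$ is exactly $n-1$.
   Context: $S_n$ is the set of permutations of $[n]$ with the weak order (inclusion of inversion sets); a lattice congruence is an equivalence relation compatible with joins and meets. Lattice congruences $R$ correspond bijectively to downsets $F_R$ of the forcing order on fences, where a cover edge joins $R$-equivalent permutations iff it lies in a fence of $F_R$. Fences. For $1\le a<b\le n$ and $L\subseteq\{a+1,\dots,b-1\}$, the fence $f(a,b,L)$ is the set of cover edges that swap adjacent entries $a,b$, with the values of $L$ to the left of $a,b$ and the other values between $a$ and $b$ to the right. Forcing order: $f(a,b,L)\prec f(c,d,M)$ iff $a\le c<d\le b$, $(a,b)\ne(c,d)$, $M=L\cap\{c+1,\dots,d-1\}$. $R$ is essential if $F_R$ contains no $f(a,a+1,\emptyset)$. $Q_R$ is the undirected cover graph of the lattice quotient $S_n/R$. *)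

theory Defs
  imports Main
begin

definition perms :: "nat \<Rightarrow> nat list set" where
  "perms n = {xs. length xs = n \<and> distinct xs \<and> set xs = {1..n}}"

definition invs :: "nat list \<Rightarrow> (nat \<times> nat) set" where
  "invs xs = {(xs ! j, xs ! i) | i j. i < j \<and> j < length xs \<and> xs ! j < xs ! i}"

definition weak_le :: "nat list \<Rightarrow> nat list \<Rightarrow> bool" where
  "weak_le x y \<longleftrightarrow> invs x \<subseteq> invs y"

definition wjoin :: "nat \<Rightarrow> nat list \<Rightarrow> nat list \<Rightarrow> nat list" where
  "wjoin n x y = (THE z. z \<in> perms n \<and> weak_le x z \<and> weak_le y z \<and>
      (\<forall>w\<in>perms n. weak_le x w \<and> weak_le y w \<longrightarrow> weak_le z w))"

definition wmeet :: "nat \<Rightarrow> nat list \<Rightarrow> nat list \<Rightarrow> nat list" where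
  "wmeet n x y = (THE z. z \<in> perms n \<and> weak_le z x \<and> weak_le z y \<and>
      (\<forall>w\<in>perms n. weak_le w x \<and> weak_le w y \<longrightarrow> weak_le w z))"

definition lattice_congruence :: "nat \<Rightarrow> (nat list \<times> nat list) set \<Rightarrow> bool" where
  "lattice_congruence n R \<longleftrightarrow> equiv (perms n) R \<and>
     (\<forall>x\<in>perms n. \<forall>y\<in>perms n. \<forall>z\<in>perms n. (x, y) \<in> R \<longrightarrow>
        (wjoin n x z, wjoin n y z) \<in> R \<and> (wmeet n x z, wmeet n y z) \<in> R)"

definition swap_adj :: "nat list \<Rightarrow> nat \<Rightarrow> nat list" where
  "swap_adj xs k = xs[k := xs ! Suc k, Suc k := xs ! k]"

text \<open>Fence f(a,b,L): cover edges (lower, upper) swapping adjacent entries a, b, with the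
  values of L left of a,b and the other values strictly between a and b to the right.\<close>
definition fence :: "nat \<Rightarrow> nat \<Rightarrow> nat \<Rightarrow> nat set \<Rightarrow> (nat list \<times> nat list) set" where
  "fence n a b L = {(x, swap_adj x k) | x k. x \<in> perms n \<and> Suc k < n \<and>
      x ! k = a \<and> x ! Suc k = b \<and>
      (\<forall>c\<in>L. c \<in> set (take k x)) \<and>
      (\<forall>c\<in>{a<..<b} - L. c \<in> set (drop (Suc (Suc k)) x))}"

definition F_of :: "nat \<Rightarrow> (nat list \<times> nat list) set \<Rightarrow> (nat \<times> nat \<times> nat set) set" where
  "F_of n R = {(a, b, L). 1 \<le> a \<and> a < b \<and> b \<le> n \<and> L \<subseteq> {a<..<b} \<and> fence n a b L \<subseteq> R}"

definition essential :: "nat \<Rightarrow> (nat list \<times> nat list) set \<Rightarrow> bool" where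
  "essential n R \<longleftrightarrow> (\<forall>a. (a, Suc a, {}) \<notin> F_of n R)"

text \<open>Quotient lattice S_n/R: classes ordered by X \<le> Y iff X \<or> Y = Y.\<close>
definition qle :: "nat \<Rightarrow> (nat list \<times> nat list) set \<Rightarrow> nat list set \<Rightarrow> nat list set \<Rightarrow> bool" where
  "qle n R X Y \<longleftrightarrow> (\<exists>x\<in>X. \<exists>y\<in>Y. (wjoin n x y, y) \<in> R)"

definition qcover :: "nat \<Rightarrow> (nat list \<times> nat list) set \<Rightarrow> nat list set \<Rightarrow> nat list set \<Rightarrow> bool" where
  "qcover n R X Y \<longleftrightarrow> X \<noteq> Y \<and> qle n R X Y \<and>
     \<not> (\<exists>Z\<in>perms n // R. Z \<noteq> X \<and> Z \<noteq> Y \<and> qle n R X Z \<and> qle n R Z Y)"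

definition qadj :: "nat \<Rightarrow> (nat list \<times> nat list) set \<Rightarrow> nat list set \<Rightarrow> nat list set \<Rightarrow> bool" where
  "qadj n R X Y \<longleftrightarrow> qcover n R X Y \<or> qcover n R Y X"

definition qdegree :: "nat \<Rightarrow> (nat list \<times> nat list) set \<Rightarrow> nat list set \<Rightarrow> nat" where
  "qdegree n R X = card {Y \<in> perms n // R. qadj n R X Y}"

definition min_degree_Q :: "nat \<Rightarrow> (nat list \<times> nat list) set \<Rightarrow> nat" where
  "min_degree_Q n R = Min (qdegree n R ` (perms n // R))"

end

theory Submission
  imports Defs
begin

definition bef :: "nat list \<Rightarrow> nat \<Rightarrow> nat \<Rightarrow> bool" where
  "bef w a b \<longleftrightarrow> (\<exists>i j. i < j \<and> j < length w \<and> w ! i = a \<and> w ! j = b)"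

lemma invs_bef: "invs w = {(a, b). a < b \<and> bef w b a}"
  unfolding invs_def bef_def by auto

lemma bef_nth: assumes "distinct w" "i < length w" "j < length w"
  shows "bef w (w!i) (w!j) \<longleftrightarrow> i < j"
  using assms unfolding bef_def by (auto simp: nth_eq_iff_index_eq)

lemma bef_set: "bef w a b \<Longrightarrow> a \<in> set w \<and> b \<in> set w"
  unfolding bef_def by auto

lemma bef_irrefl: "distinct w \<Longrightarrow> \<not> bef w a a"
  unfolding bef_def by (auto simp: nth_eq_iff_index_eq)

lemma bef_trans: assumes "distinct w" "bef w a b" "bef w b c" shows "bef w a c"
  using assms unfolding bef_def by (auto simp: nth_eq_iff_index_eq) (metis less_trans)

lemma bef_total: assumes "a \<in> set w" "b \<in> set w" "a \<noteq> b"
  shows "bef w a b \<or> bef w b a"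
proof -
  obtain i j where "i < length w" "j < length w" "w!i = a" "w!j = b" using assms by (auto simp: in_set_conv_nth)
  then show ?thesis unfolding bef_def using assms(3) by (metis linorder_neqE_nat)
qed

lemma bef_asym: "distinct w \<Longrightarrow> bef w a b \<Longrightarrow> \<not> bef w b a"
  using bef_trans bef_irrefl by blast

lemma swap_length[simp]: "length (swap_adj w k) = length w"
  unfolding swap_adj_def by simp

lemma swap_nth: "Suc k < length w \<Longrightarrow> m < length w \<Longrightarrow>
   swap_adj w k ! m = (if m = k then w ! Suc k else if m = Suc k then w ! k else w ! m)"
  unfolding swap_adj_def by (auto simp: nth_list_update)

lemma swap_perms: assumes "w \<in> perms n" "Suc k < n" shows "swap_adj w k \<in> perms n"
proof -
  have "swap_adj w k = w[k := w ! Suc k, Suc k := w ! k]" by (simp add: swap_adj_def)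
  moreover have "distinct (w[k := w ! Suc k, Suc k := w ! k])" "set (w[k := w ! Suc k, Suc k := w ! k]) = set w"
    using assms unfolding perms_def by (auto simp: distinct_swap set_swap)
  ultimately show ?thesis using assms unfolding perms_def by auto
qed

lemma swap_swap: assumes "Suc k < length w" shows "swap_adj (swap_adj w k) k = w"
proof (rule nth_equalityI)
  show "length (swap_adj (swap_adj w k) k) = length w" by simp
  fix i assume "i < length (swap_adj (swap_adj w k) k)"
  then have i: "i < length w" by simp
  have l: "Suc k < length (swap_adj w k)" using assms by simp
  show "swap_adj (swap_adj w k) k ! i = w ! i"
    using swap_nth[OF l i[folded swap_length[of w k]]] swap_nth[OF assms] assms i by auto
qed



lemma bef_swap: assumes "distinct w" "Suc k < length w"
  shows "bef (swap_adj w k) a b \<longleftrightarrow> (bef w a b \<and> \<not>(a = w!k \<and> b = w!Suc k)) \<or> (a = w!Suc k \<and> b = w!k)"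
proof (cases "a \<in> set w \<and> b \<in> set w")
  case False
  have ss: "set (swap_adj w k) = set w" using assms by (simp add: swap_adj_def set_swap)
  have m: "w!k \<in> set w" "w!Suc k \<in> set w" using assms by auto
  have "\<not> bef (swap_adj w k) a b" using bef_set[of "swap_adj w k" a b] ss False by blast
  moreover have "\<not> bef w a b" using bef_set[of w a b] False by blast
  ultimately show ?thesis using m False by blast
next
  case True
  then obtain p q where pq: "p < length w" "q < length w" "a = w!p" "b = w!q" by (auto simp: in_set_conv_nth)
  define s where "s = (\<lambda>i. if i = k then Suc k else if i = Suc k then k else i)"
  have ds: "distinct (swap_adj w k)" using assms by (simp add: swap_adj_def distinct_swap)
  have sl: "s i < length w" if "i < length w" for i using that assms by (auto simp: s_def)
  have sw: "swap_adj w k ! (s i) = w ! i" if "i < length w" for i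
    using that assms sl by (auto simp: s_def swap_nth)
  have "bef (swap_adj w k) a b \<longleftrightarrow> s p < s q"
    using bef_nth[OF ds, of "s p" "s q"] sl pq sw by simp
  moreover have "bef w a b \<longleftrightarrow> p < q" using bef_nth[OF assms(1)] pq by simp
  moreover have "a = w!k \<longleftrightarrow> p = k" "b = w!Suc k \<longleftrightarrow> q = Suc k" "a = w!Suc k \<longleftrightarrow> p = Suc k" "b = w!k \<longleftrightarrow> q = k"
    using pq assms nth_eq_iff_index_eq[OF assms(1)] by (metis Suc_lessD)+
  moreover have "s p < s q \<longleftrightarrow> (p < q \<and> \<not>(p = k \<and> q = Suc k)) \<or> (p = Suc k \<and> q = k)"
    unfolding s_def by auto
  ultimately show ?thesis by blast
qed

lemma perms_distinct: "w \<in> perms n \<Longrightarrow> distinct w" and perms_len: "w \<in> perms n \<Longrightarrow> length w = n"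
  and perms_set: "w \<in> perms n \<Longrightarrow> set w = {1..n}"
  unfolding perms_def by auto

lemma invs_swap_up: assumes "w \<in> perms n" "Suc k < n" "w!k < w!Suc k"
  shows "invs (swap_adj w k) = insert (w!k, w!Suc k) (invs w)"
proof -
  have d: "distinct w" and l: "length w = n" using assms perms_distinct perms_len by auto
  have ne: "w!k \<noteq> w!Suc k" using assms by simp
  have "bef w (w!k) (w!Suc k)" using bef_nth[OF d] l assms by simp
  then have nb: "\<not> bef w (w!Suc k) (w!k)" using bef_asym d by blast
  show ?thesis unfolding invs_bef using bef_swap[OF d, of k] l assms nb by auto
qed

lemma pair_notin_invs: assumes "w \<in> perms n" "i < j" "j < n" shows "(w!i, w!j) \<notin> invs w"
proof -
  have d: "distinct w" and l: "length w = n" using assms perms_distinct perms_len by auto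
  have "bef w (w!i) (w!j)" using bef_nth[OF d] l assms by simp
  then show ?thesis unfolding invs_bef using bef_asym[OF d] by auto
qed

lemma pair_in_invs: assumes "w \<in> perms n" "i < j" "j < n" shows "(w!j, w!i) \<in> invs w \<longleftrightarrow> w!j < w!i"
proof -
  have d: "distinct w" and l: "length w = n" using assms perms_distinct perms_len by auto
  have "bef w (w!i) (w!j)" using bef_nth[OF d] l assms by simp
  then show ?thesis unfolding invs_bef by auto
qed

lemma invs_swap_down: assumes "w \<in> perms n" "Suc k < n" "w!k > w!Suc k"
  shows "invs (swap_adj w k) = invs w - {(w!Suc k, w!k)}"
proof -
  let ?v = "swap_adj w k"
  have l: "length w = n" using assms perms_len by auto
  have v: "?v \<in> perms n" using swap_perms assms by auto
  have vk: "?v!k = w!Suc k" "?v!Suc k = w!k" using swap_nth[of k w] l assms by auto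
  have "invs (swap_adj ?v k) = insert (?v!k, ?v!Suc k) (invs ?v)"
    using invs_swap_up[OF v assms(2)] vk assms by simp
  then have e: "invs w = insert (w!Suc k, w!k) (invs ?v)" using swap_swap[of k w] l assms vk by simp
  have "(w!Suc k, w!k) \<notin> invs ?v" using pair_notin_invs[OF v, of k "Suc k"] vk assms by simp
  then show ?thesis using e by auto
qed



definition pairs :: "nat \<Rightarrow> (nat \<times> nat) set" where
  "pairs n = {(c, d). 1 \<le> c \<and> c < d \<and> d \<le> n}"

definition biclosed :: "nat \<Rightarrow> (nat \<times> nat) set \<Rightarrow> bool" where
  "biclosed n T \<longleftrightarrow> T \<subseteq> pairs n \<and> (\<forall>c d e. (c, d) \<in> T \<longrightarrow> (d, e) \<in> T \<longrightarrow> (c, e) \<in> T) \<and>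
     (\<forall>c d e. (c, e) \<in> T \<longrightarrow> c < d \<longrightarrow> d < e \<longrightarrow> (c, d) \<in> T \<or> (d, e) \<in> T)"

lemma invs_biclosed: assumes w: "w \<in> perms n" shows "biclosed n (invs w)"
proof -
  have d: "distinct w" and s: "set w = {1..n}" using w perms_distinct perms_set by auto
  have sub: "invs w \<subseteq> pairs n" unfolding invs_bef pairs_def using bef_set s by fastforce
  have tr: "(c, e) \<in> invs w" if "(c, d) \<in> invs w" "(d, e) \<in> invs w" for c d e
    using that bef_trans[OF d] unfolding invs_bef by auto
  have co: "(c, d) \<in> invs w \<or> (d, e) \<in> invs w" if "(c, e) \<in> invs w" "c < d" "d < e" for c d e
  proof -
    have "(c, e) \<in> pairs n" using that sub by auto
    then have dm: "d \<in> set w" "c \<in> set w" using s that unfolding pairs_def by auto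
    have be: "bef w e c" using that unfolding invs_bef by auto
    show ?thesis
    proof (cases "bef w d c")
      case True then show ?thesis using that unfolding invs_bef by auto
    next
      case False
      then have "bef w c d" using bef_total[OF dm(2,1)] that by auto
      then have "bef w e d" using bef_trans[OF d be] by auto
      then show ?thesis using that unfolding invs_bef by auto
    qed
  qed
  show ?thesis unfolding biclosed_def using sub tr co by blast
qed

lemma pos_nth: assumes "distinct x" "i < length x" shows "card {u \<in> set x. bef x u (x!i)} = i"
proof -
  have "{u \<in> set x. bef x u (x!i)} = (\<lambda>j. x!j) ` {..<i}"
  proof
    show "{u \<in> set x. bef x u (x ! i)} \<subseteq> (!) x ` {..<i}"
    proof
      fix u assume "u \<in> {u \<in> set x. bef x u (x ! i)}"
      then obtain j where j: "j < length x" "u = x!j" "bef x (x!j) (x!i)" by (auto simp: in_set_conv_nth)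
      then have "j < i" using bef_nth[OF assms(1) j(1) assms(2)] by simp
      then show "u \<in> (!) x ` {..<i}" using j by auto
    qed
    show "(!) x ` {..<i} \<subseteq> {u \<in> set x. bef x u (x ! i)}"
      using bef_nth[OF assms(1) _ assms(2)] assms(2) by auto
  qed
  moreover have "inj_on (\<lambda>j. x!j) {..<i}" using assms by (auto simp: inj_on_def nth_eq_iff_index_eq)
  ultimately show ?thesis by (simp add: card_image)
qed

lemma list_eq_bef: assumes "distinct x" "distinct y" "set x = set y" "\<And>a b. bef x a b \<longleftrightarrow> bef y a b"
  shows "x = y"
proof -
  have l: "length x = length y" using assms distinct_card by metis
  show ?thesis
  proof (rule nth_equalityI[OF l])
    fix i assume i: "i < length x"
    have "x!i \<in> set y" using i assms(3) by auto
    then obtain i' where i': "i' < length y" "y!i' = x!i" by (auto simp: in_set_conv_nth)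
    have "i = card {u \<in> set x. bef x u (x!i)}" using pos_nth[OF assms(1) i] by simp
    also have "\<dots> = card {u \<in> set y. bef y u (y!i')}" using assms(3,4) i' by simp
    also have "\<dots> = i'" using pos_nth[OF assms(2) i'(1)] .
    finally show "x!i = y!i" using i' by simp
  qed
qed

lemma invs_inj: assumes "x \<in> perms n" "y \<in> perms n" "invs x = invs y" shows "x = y"
proof -
  have d: "distinct x" "distinct y" and s: "set x = {1..n}" "set y = {1..n}"
    using assms perms_distinct perms_set by auto
  have "bef x a b \<longleftrightarrow> bef y a b" for a b
  proof (cases "a \<in> {1..n} \<and> b \<in> {1..n} \<and> a \<noteq> b")
    case True
    then have "bef x a b \<longleftrightarrow> \<not> bef x b a" "bef y a b \<longleftrightarrow> \<not> bef y b a"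
      using bef_total bef_asym d s by metis+
    moreover have "bef x b a \<longleftrightarrow> bef y b a" if "a < b" using assms(3) that unfolding invs_bef by blast
    moreover have "bef x a b \<longleftrightarrow> bef y a b" if "b < a" using assms(3) that unfolding invs_bef by blast
    ultimately show ?thesis using True by (metis linorder_neqE_nat)
  next
    case False
    then show ?thesis using bef_set bef_irrefl d s by metis
  qed
  then show ?thesis using list_eq_bef d s by metis
qed

lemma weak_le_antisym: "x \<in> perms n \<Longrightarrow> y \<in> perms n \<Longrightarrow> weak_le x y \<Longrightarrow> weak_le y x \<Longrightarrow> x = y"
  unfolding weak_le_def using invs_inj by blast

lemma weak_le_trans: "weak_le x y \<Longrightarrow> weak_le y z \<Longrightarrow> weak_le x z"
  unfolding weak_le_def by blast

lemma weak_le_refl[simp]: "weak_le x x"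
  unfolding weak_le_def by blast



lemma realize: assumes bc: "biclosed n T" shows "\<exists>w \<in> perms n. invs w = T"
proof -
  define V where "V = {1..n}"
  define B where "B = (\<lambda>c d. (c < d \<and> (c, d) \<notin> T) \<or> (d < c \<and> (d, c) \<in> T))"
  have sub: "T \<subseteq> pairs n" and tr: "\<And>c d e. (c, d) \<in> T \<Longrightarrow> (d, e) \<in> T \<Longrightarrow> (c, e) \<in> T"
    and co: "\<And>c d e. (c, e) \<in> T \<Longrightarrow> c < d \<Longrightarrow> d < e \<Longrightarrow> (c, d) \<in> T \<or> (d, e) \<in> T"
    using bc unfolding biclosed_def by blast+
  have Birr: "\<not> B c c" for c unfolding B_def by auto
  have Btot: "c \<noteq> d \<Longrightarrow> B c d \<or> B d c" for c d unfolding B_def by auto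
  have Basym: "B c d \<Longrightarrow> \<not> B d c" for c d unfolding B_def by auto
  have Btr: "B c e" if "B c d" "B d e" for c d e
  proof -
    have "c \<noteq> e" using that Basym by blast
    have "c \<noteq> d" "d \<noteq> e" using that Birr by auto
    consider "c < d" "d < e" | "c < e" "e < d" | "d < c" "c < e" | "d < e" "e < c" | "e < c" "c < d" | "e < d" "d < c"
      using \<open>c \<noteq> e\<close> \<open>c \<noteq> d\<close> \<open>d \<noteq> e\<close> by (metis linorder_neqE_nat)
    then show ?thesis
    proof cases
      case 1 then show ?thesis using that co unfolding B_def by auto
    next
      case 2 then show ?thesis using that tr unfolding B_def by auto
    next
      case 3 then show ?thesis using that tr unfolding B_def by auto
    next
      case 4 then show ?thesis using that co unfolding B_def by auto
    next
      case 5 then show ?thesis using that co unfolding B_def by auto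
    next
      case 6 then show ?thesis using that tr unfolding B_def by auto
    qed
  qed
  define rank where "rank = (\<lambda>c. card {d \<in> V. B d c})"
  have fV: "finite V" unfolding V_def by simp
  have rank_less: "rank c < rank d" if "c \<in> V" "B c d" for c d
  proof -
    have "{e \<in> V. B e c} \<subset> {e \<in> V. B e d}"
    proof
      show "{e \<in> V. B e c} \<subseteq> {e \<in> V. B e d}" using Btr that by blast
      show "{e \<in> V. B e c} \<noteq> {e \<in> V. B e d}" using that Birr by blast
    qed
    then show ?thesis unfolding rank_def using fV by (simp add: psubset_card_mono)
  qed
  have rank_iff: "rank c < rank d \<longleftrightarrow> B c d" if "c \<in> V" "d \<in> V" for c d
    using rank_less Btot Basym that by (metis less_asym less_irrefl)
  have inj: "inj_on rank V"
    by (rule inj_onI) (metis Btot rank_less less_irrefl)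
  have rk: "rank c < n" if "c \<in> V" for c
  proof -
    have "{d \<in> V. B d c} \<subseteq> V - {c}" using Birr by auto
    then have "rank c \<le> card (V - {c})" unfolding rank_def using fV by (simp add: card_mono)
    also have "\<dots> < n" using that fV unfolding V_def by (simp add: card_Diff_singleton)
    finally show ?thesis .
  qed
  have img: "rank ` V = {0..<n}"
  proof (rule card_subset_eq)
    show "finite {0..<n}" by simp
    show "rank ` V \<subseteq> {0..<n}" using rk by auto
    show "card (rank ` V) = card {0..<n}" using inj card_image unfolding V_def by fastforce
  qed
  then have bij: "bij_betw rank V {0..<n}" using inj unfolding bij_betw_def by simp
  define f where "f = the_inv_into V rank"
  have fb: "bij_betw f {0..<n} V" unfolding f_def using bij_betw_the_inv_into[OF bij] .
  have rf: "rank (f i) = i" if "i < n" for i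
    unfolding f_def using f_the_inv_into_f_bij_betw[OF bij] that by simp
  define w where "w = map f [0..<n]"
  have lw: "length w = n" unfolding w_def by simp
  have wi: "w!i = f i" if "i < n" for i unfolding w_def using that by simp
  have dw: "distinct w" unfolding w_def using fb bij_betw_imp_inj_on by (simp add: distinct_map)
  have sw: "set w = V" unfolding w_def using fb bij_betw_imp_surj_on by fastforce
  have wp: "w \<in> perms n" unfolding perms_def using lw dw sw V_def by simp
  have befw: "bef w a b \<longleftrightarrow> a \<in> V \<and> b \<in> V \<and> B a b" for a b
  proof (cases "a \<in> V \<and> b \<in> V")
    case True
    then have "rank a < n" "rank b < n" using rk by auto
    moreover have "f (rank a) = a" "f (rank b) = b"
      unfolding f_def using True the_inv_into_f_f[OF inj] by auto
    ultimately have "w ! rank a = a" "w ! rank b = b" using wi by auto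
    then have "bef w a b \<longleftrightarrow> rank a < rank b" using bef_nth[OF dw] \<open>rank a < n\<close> \<open>rank b < n\<close> lw by metis
    then show ?thesis using rank_iff True by simp
  next
    case False then show ?thesis using bef_set sw by blast
  qed
  have "invs w = T"
  proof
    show "invs w \<subseteq> T" unfolding invs_bef befw B_def by auto
    show "T \<subseteq> invs w"
    proof
      fix p assume "p \<in> T"
      then obtain a b where "p = (a, b)" "1 \<le> a" "a < b" "b \<le> n" using sub unfolding pairs_def by auto
      then show "p \<in> invs w" unfolding invs_bef befw B_def V_def using \<open>p \<in> T\<close> by auto
    qed
  qed
  then show ?thesis using wp by blast
qed

lemma trancl_sub: assumes "A \<subseteq> B" "trans B" shows "A\<^sup>+ \<subseteq> B"
proof (rule subrelI)
  fix x y assume "(x, y) \<in> A\<^sup>+"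
  then show "(x, y) \<in> B" using assms by (induction rule: trancl_induct) (auto dest: transD)
qed

lemma biclosed_sub: "biclosed n T \<Longrightarrow> T \<subseteq> pairs n" unfolding biclosed_def by blast

lemma pairs_trans: "trans (pairs n)" unfolding trans_def pairs_def by auto

lemma biclosed_trans: "biclosed n T \<Longrightarrow> trans T" unfolding biclosed_def trans_def by blast

lemma biclosed_join: assumes "biclosed n I" "biclosed n J" shows "biclosed n ((I \<union> J)\<^sup>+)"
proof -
  let ?U = "I \<union> J"
  have sU: "?U \<subseteq> pairs n" using assms unfolding biclosed_def by blast
  have sub: "?U\<^sup>+ \<subseteq> pairs n" using trancl_sub[OF sU pairs_trans] .
  have coU: "(c, d) \<in> ?U \<or> (d, e) \<in> ?U" if "(c, e) \<in> ?U" "c < d" "d < e" for c d e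
    using assms that unfolding biclosed_def by blast
  have lt: "c < d" if "(c, d) \<in> ?U\<^sup>+" for c d using that sub unfolding pairs_def by auto
  have co: "\<forall>d. c < d \<longrightarrow> d < e \<longrightarrow> (c, d) \<in> ?U\<^sup>+ \<or> (d, e) \<in> ?U\<^sup>+" if "(c, e) \<in> ?U\<^sup>+" for c e
    using that
  proof (induction rule: trancl_induct)
    case (base y)
    then show ?case using coU by blast
  next
    case (step y z)
    show ?case
    proof (intro allI impI)
      fix d assume d: "c < d" "d < z"
      have cy: "(c, y) \<in> ?U\<^sup>+" by fact
      have yz: "(y, z) \<in> ?U" by fact
      have "y < z" using yz sU unfolding pairs_def by auto
      have "c < y" using lt cy by blast
      consider "d < y" | "d = y" | "y < d" by linarith
      then show "(c, d) \<in> ?U\<^sup>+ \<or> (d, z) \<in> ?U\<^sup>+"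
      proof cases
        case 1
        then have "(c, d) \<in> ?U\<^sup>+ \<or> (d, y) \<in> ?U\<^sup>+" using step.IH d by blast
        then show ?thesis using yz by (meson trancl.trancl_into_trancl)
      next
        case 2 then show ?thesis using cy by simp
      next
        case 3
        then have "(y, d) \<in> ?U \<or> (d, z) \<in> ?U" using coU yz d by blast
        then show ?thesis using cy by (meson r_into_trancl trancl.trancl_into_trancl)
      qed
    qed
  qed
  have t: "\<forall>c d e. (c, d) \<in> ?U\<^sup>+ \<longrightarrow> (d, e) \<in> ?U\<^sup>+ \<longrightarrow> (c, e) \<in> ?U\<^sup>+"
    by (meson trancl_trans)
  have c: "\<forall>c d e. (c, e) \<in> ?U\<^sup>+ \<longrightarrow> c < d \<longrightarrow> d < e \<longrightarrow> (c, d) \<in> ?U\<^sup>+ \<or> (d, e) \<in> ?U\<^sup>+"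
    using co by blast
  show ?thesis unfolding biclosed_def by (intro conjI sub t c)
qed

lemma biclosed_compl: assumes "biclosed n T" shows "biclosed n (pairs n - T)"
proof -
  have sub: "T \<subseteq> pairs n" and tr: "\<And>c d e. (c, d) \<in> T \<Longrightarrow> (d, e) \<in> T \<Longrightarrow> (c, e) \<in> T"
    and co: "\<And>c d e. (c, e) \<in> T \<Longrightarrow> c < d \<Longrightarrow> d < e \<Longrightarrow> (c, d) \<in> T \<or> (d, e) \<in> T"
    using assms unfolding biclosed_def by blast+
  have t2: "(c, e) \<in> pairs n - T" if "(c, d) \<in> pairs n - T" "(d, e) \<in> pairs n - T" for c d e
  proof -
    have "(c, e) \<in> pairs n" "c < d" "d < e" using that unfolding pairs_def by auto
    then show ?thesis using co that by blast
  qed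
  have c2: "(c, d) \<in> pairs n - T \<or> (d, e) \<in> pairs n - T" if "(c, e) \<in> pairs n - T" "c < d" "d < e" for c d e
  proof -
    have "(c, d) \<in> pairs n" "(d, e) \<in> pairs n" using that unfolding pairs_def by auto
    then show ?thesis using tr that by blast
  qed
  show ?thesis unfolding biclosed_def using t2 c2 by blast
qed

lemma join_exists: assumes "x \<in> perms n" "y \<in> perms n"
  shows "\<exists>z \<in> perms n. weak_le x z \<and> weak_le y z \<and> (\<forall>w \<in> perms n. weak_le x w \<and> weak_le y w \<longrightarrow> weak_le z w)"
proof -
  have "biclosed n ((invs x \<union> invs y)\<^sup>+)" using biclosed_join invs_biclosed assms by blast
  then obtain z where z: "z \<in> perms n" "invs z = (invs x \<union> invs y)\<^sup>+" using realize by blast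
  have "weak_le z w" if "w \<in> perms n" "weak_le x w" "weak_le y w" for w
  proof -
    have "invs x \<union> invs y \<subseteq> invs w" using that unfolding weak_le_def by blast
    then have "(invs x \<union> invs y)\<^sup>+ \<subseteq> invs w"
      using trancl_sub biclosed_trans[OF invs_biclosed[OF that(1)]] by blast
    then show ?thesis unfolding weak_le_def using z by simp
  qed
  moreover have "weak_le x z" "weak_le y z" unfolding weak_le_def using z by auto
  ultimately show ?thesis using z by blast
qed

lemma meet_exists: assumes "x \<in> perms n" "y \<in> perms n"
  shows "\<exists>z \<in> perms n. weak_le z x \<and> weak_le z y \<and> (\<forall>w \<in> perms n. weak_le w x \<and> weak_le w y \<longrightarrow> weak_le w z)"
proof -
  let ?C = "((pairs n - invs x) \<union> (pairs n - invs y))\<^sup>+"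
  have bx: "biclosed n (invs x)" "biclosed n (invs y)" using invs_biclosed assms by auto
  have "biclosed n ?C" using biclosed_join[OF biclosed_compl[OF bx(1)] biclosed_compl[OF bx(2)]] .
  then have "biclosed n (pairs n - ?C)" by (rule biclosed_compl)
  then obtain z where z: "z \<in> perms n" "invs z = pairs n - ?C" using realize by blast
  have px: "invs x \<subseteq> pairs n" "invs y \<subseteq> pairs n" using biclosed_sub[OF bx(1)] biclosed_sub[OF bx(2)] .
  have "weak_le w z" if "w \<in> perms n" "weak_le w x" "weak_le w y" for w
  proof -
    have bw: "biclosed n (pairs n - invs w)" using biclosed_compl[OF invs_biclosed[OF that(1)]] .
    have "(pairs n - invs x) \<union> (pairs n - invs y) \<subseteq> pairs n - invs w" using that unfolding weak_le_def by blast
    then have "?C \<subseteq> pairs n - invs w"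
      using trancl_sub biclosed_trans[OF bw] by blast
    moreover have "invs w \<subseteq> pairs n" using biclosed_sub[OF invs_biclosed[OF that(1)]] .
    ultimately have "invs w \<subseteq> pairs n - ?C" by (simp add: subset_Diff_insert Diff_mono disjoint_iff subset_iff) blast
    then show ?thesis unfolding weak_le_def using z by simp
  qed
  moreover have "weak_le z x" "weak_le z y" unfolding weak_le_def
  proof -
    have "(pairs n - invs x) \<union> (pairs n - invs y) \<subseteq> ?C" by (rule subrelI) (rule r_into_trancl)
    then show "invs z \<subseteq> invs x" "invs z \<subseteq> invs y" unfolding z(2) by blast+
  qed
  ultimately show ?thesis using z by blast
qed

lemma wjoin_props: assumes "x \<in> perms n" "y \<in> perms n"
  shows "wjoin n x y \<in> perms n \<and> weak_le x (wjoin n x y) \<and> weak_le y (wjoin n x y) \<and>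
    (\<forall>w \<in> perms n. weak_le x w \<and> weak_le y w \<longrightarrow> weak_le (wjoin n x y) w)"
proof -
  obtain z where z: "z \<in> perms n" "weak_le x z \<and> weak_le y z \<and> (\<forall>w \<in> perms n. weak_le x w \<and> weak_le y w \<longrightarrow> weak_le z w)"
    using join_exists[OF assms] by blast
  have "wjoin n x y = z" unfolding wjoin_def
  proof (rule the_equality)
    show "z \<in> perms n \<and> weak_le x z \<and> weak_le y z \<and> (\<forall>w\<in>perms n. weak_le x w \<and> weak_le y w \<longrightarrow> weak_le z w)" using z by blast
    fix z' assume "z' \<in> perms n \<and> weak_le x z' \<and> weak_le y z' \<and> (\<forall>w\<in>perms n. weak_le x w \<and> weak_le y w \<longrightarrow> weak_le z' w)"
    then show "z' = z" using z weak_le_antisym[of z' n z] by blast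
  qed
  then show ?thesis using z by simp
qed

lemma wmeet_props: assumes "x \<in> perms n" "y \<in> perms n"
  shows "wmeet n x y \<in> perms n \<and> weak_le (wmeet n x y) x \<and> weak_le (wmeet n x y) y \<and>
    (\<forall>w \<in> perms n. weak_le w x \<and> weak_le w y \<longrightarrow> weak_le w (wmeet n x y))"
proof -
  obtain z where z: "z \<in> perms n" "weak_le z x \<and> weak_le z y \<and> (\<forall>w \<in> perms n. weak_le w x \<and> weak_le w y \<longrightarrow> weak_le w z)"
    using meet_exists[OF assms] by blast
  have "wmeet n x y = z" unfolding wmeet_def
  proof (rule the_equality)
    show "z \<in> perms n \<and> weak_le z x \<and> weak_le z y \<and> (\<forall>w\<in>perms n. weak_le w x \<and> weak_le w y \<longrightarrow> weak_le w z)" using z by blast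
    fix z' assume "z' \<in> perms n \<and> weak_le z' x \<and> weak_le z' y \<and> (\<forall>w\<in>perms n. weak_le w x \<and> weak_le w y \<longrightarrow> weak_le w z')"
    then show "z' = z" using z weak_le_antisym[of z' n z] by blast
  qed
  then show ?thesis using z by simp
qed

lemma wjoin_eqI: assumes "x \<in> perms n" "y \<in> perms n" "z \<in> perms n" "weak_le x z" "weak_le y z"
  "\<And>w. w \<in> perms n \<Longrightarrow> weak_le x w \<Longrightarrow> weak_le y w \<Longrightarrow> weak_le z w"
  shows "wjoin n x y = z"
proof -
  have j: "wjoin n x y \<in> perms n" "weak_le x (wjoin n x y)" "weak_le y (wjoin n x y)"
    "weak_le (wjoin n x y) z" using wjoin_props[OF assms(1,2)] assms by blast+
  then have "weak_le z (wjoin n x y)" using assms(6) by blast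
  then show ?thesis using weak_le_antisym[OF j(1) assms(3) j(4)] by simp
qed

lemma wmeet_eqI: assumes "x \<in> perms n" "y \<in> perms n" "z \<in> perms n" "weak_le z x" "weak_le z y"
  "\<And>w. w \<in> perms n \<Longrightarrow> weak_le w x \<Longrightarrow> weak_le w y \<Longrightarrow> weak_le w z"
  shows "wmeet n x y = z"
proof -
  have j: "wmeet n x y \<in> perms n" "weak_le (wmeet n x y) x" "weak_le (wmeet n x y) y"
    "weak_le z (wmeet n x y)" using wmeet_props[OF assms(1,2)] assms by blast+
  then have "weak_le (wmeet n x y) z" using assms(6) by blast
  then show ?thesis using weak_le_antisym[OF j(1) assms(3)] j(4) by simp
qed



definition up :: "nat \<Rightarrow> nat list \<Rightarrow> nat \<Rightarrow> bool" where
  "up n w k \<longleftrightarrow> Suc k < n \<and> w ! k < w ! Suc k"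

definition pr :: "nat list \<Rightarrow> nat \<Rightarrow> nat \<times> nat" where
  "pr w k = (w ! k, w ! Suc k)"

lemma up_perm: "w \<in> perms n \<Longrightarrow> up n w k \<Longrightarrow> swap_adj w k \<in> perms n"
  unfolding up_def using swap_perms by blast

lemma up_invs: "w \<in> perms n \<Longrightarrow> up n w k \<Longrightarrow> invs (swap_adj w k) = insert (pr w k) (invs w)"
  unfolding up_def pr_def using invs_swap_up by blast

lemma up_notin: "w \<in> perms n \<Longrightarrow> up n w k \<Longrightarrow> pr w k \<notin> invs w"
  unfolding up_def pr_def using pair_notin_invs by blast

lemma up_le: "w \<in> perms n \<Longrightarrow> up n w k \<Longrightarrow> weak_le w (swap_adj w k)"
  unfolding weak_le_def using up_invs by blast

lemma up_neq: "w \<in> perms n \<Longrightarrow> up n w k \<Longrightarrow> swap_adj w k \<noteq> w"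
  using up_invs up_notin by fastforce

lemma finite_invs: "finite (invs w)"
proof -
  have "invs w \<subseteq> set w \<times> set w" unfolding invs_bef using bef_set by blast
  then show ?thesis by (rule finite_subset) simp
qed

lemma up_card: "w \<in> perms n \<Longrightarrow> up n w k \<Longrightarrow> card (invs (swap_adj w k)) = Suc (card (invs w))"
  using up_invs up_notin finite_invs by simp

lemma cover_between: assumes "w \<in> perms n" "up n w k" "z \<in> perms n" "weak_le w z" "weak_le z (swap_adj w k)"
  shows "z = w \<or> z = swap_adj w k"
proof -
  have a: "invs w \<subseteq> invs z" using assms(4) unfolding weak_le_def .
  have b: "invs z \<subseteq> invs (swap_adj w k)" using assms(5) unfolding weak_le_def .
  have e: "invs (swap_adj w k) = insert (pr w k) (invs w)" by (rule up_invs[OF assms(1,2)])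
  have c: "invs z \<subseteq> insert (pr w k) (invs w)" using b unfolding e .
  have "invs z = invs w \<or> invs z = invs (swap_adj w k)"
  proof (cases "pr w k \<in> invs z")
    case True
    then have "invs z = insert (pr w k) (invs w)" using a c by auto
    then show ?thesis using e by simp
  next
    case False
    then have "invs z = invs w" using a c by auto
    then show ?thesis by simp
  qed
  then show ?thesis using invs_inj[OF assms(3)] assms(1) up_perm[OF assms(1,2)] by blast
qed

lemma Cgap: assumes x: "x \<in> perms n" and y: "y \<in> perms n" and xy: "weak_le x y"
  shows "i < j \<Longrightarrow> j < n \<Longrightarrow> x!i < x!j \<Longrightarrow> (x!i, x!j) \<in> invs y \<Longrightarrow> \<exists>k. up n x k \<and> pr x k \<in> invs y"
proof (induction "j - i" arbitrary: i rule: less_induct)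
  case less
  have by_: "biclosed n (invs y)" using invs_biclosed[OF y] .
  have ytr: "\<And>c d e. (c, d) \<in> invs y \<Longrightarrow> (d, e) \<in> invs y \<Longrightarrow> (c, e) \<in> invs y"
    and yco: "\<And>c d e. (c, e) \<in> invs y \<Longrightarrow> c < d \<Longrightarrow> d < e \<Longrightarrow> (c, d) \<in> invs y \<or> (d, e) \<in> invs y"
    using by_ unfolding biclosed_def by blast+
  have xsub: "invs x \<subseteq> invs y" using xy unfolding weak_le_def .
  have dx: "distinct x" and lx: "length x = n" using x perms_distinct perms_len by auto
  show ?case
  proof (cases "j = Suc i")
    case True
    then show ?thesis using less.prems unfolding up_def pr_def by auto
  next
    case False
    then have ij: "Suc i < j" using less.prems by simp
    let ?a = "x!i" and ?b = "x!j" and ?e = "x!Suc i"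
    have ne: "?e \<noteq> ?a" "?e \<noteq> ?b" using nth_eq_iff_index_eq[OF dx, of "Suc i" i] nth_eq_iff_index_eq[OF dx, of "Suc i" j] lx ij less.prems by auto
    consider "?a < ?e" "?e < ?b" | "?b < ?e" | "?e < ?a" using ne less.prems by linarith
    then show ?thesis
    proof cases
      case 1
      then have "(?a, ?e) \<in> invs y \<or> (?e, ?b) \<in> invs y" using yco less.prems by blast
      then show ?thesis
      proof
        assume "(?a, ?e) \<in> invs y"
        then show ?thesis using 1 ij less.prems unfolding up_def pr_def by (intro exI[of _ i]) auto
      next
        assume h: "(?e, ?b) \<in> invs y"
        have "j - Suc i < j - i" using ij by simp
        then show ?thesis using less.hyps[of "Suc i"] ij less.prems(2) 1 h by blast
      qed
    next
      case 2
      have "(?b, ?e) \<in> invs x" using pair_in_invs[OF x, of "Suc i" j] ij less.prems 2 by simp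
      then have "(?a, ?e) \<in> invs y" using ytr less.prems xsub by blast
      then show ?thesis using 2 ij less.prems unfolding up_def pr_def by (intro exI[of _ i]) auto
    next
      case 3
      have "(?e, ?a) \<in> invs x" using pair_in_invs[OF x, of i "Suc i"] ij less.prems 3 by simp
      then have h: "(?e, ?b) \<in> invs y" using ytr less.prems xsub by blast
      have "j - Suc i < j - i" using ij by simp
      then show ?thesis using less.hyps[of "Suc i"] ij less.prems 3 h by fastforce
    qed
  qed
qed

lemma exists_up: assumes x: "x \<in> perms n" and y: "y \<in> perms n" and xy: "weak_le x y" and ne: "x \<noteq> y"
  shows "\<exists>k. up n x k \<and> weak_le (swap_adj x k) y"
proof -
  have "invs x \<noteq> invs y" using invs_inj x y ne by blast
  then obtain a b where ab: "(a, b) \<in> invs y" "(a, b) \<notin> invs x" using xy unfolding weak_le_def by auto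
  have "(a, b) \<in> pairs n" using ab biclosed_sub[OF invs_biclosed[OF y]] by blast
  then have abn: "a \<in> set x" "b \<in> set x" "a < b" using perms_set[OF x] unfolding pairs_def by auto
  obtain i j where ij: "i < n" "j < n" "x!i = a" "x!j = b"
    using abn perms_len[OF x] by (auto simp: in_set_conv_nth)
  have "i \<noteq> j" using ij abn by auto
  moreover have "\<not> j < i" using pair_in_invs[OF x, of j i] ij abn ab by auto
  ultimately have "i < j" by simp
  then obtain k where k: "up n x k" "pr x k \<in> invs y" using Cgap[OF x y xy] ij abn ab by blast
  then have "weak_le (swap_adj x k) y" using up_invs[OF x k(1)] xy unfolding weak_le_def by simp
  then show ?thesis using k by blast
qed

lemma J_in: "x \<in> perms n \<Longrightarrow> y \<in> perms n \<Longrightarrow> wjoin n x y \<in> perms n" using wjoin_props by blast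
lemma J_ub1: "x \<in> perms n \<Longrightarrow> y \<in> perms n \<Longrightarrow> weak_le x (wjoin n x y)" using wjoin_props by blast
lemma J_ub2: "x \<in> perms n \<Longrightarrow> y \<in> perms n \<Longrightarrow> weak_le y (wjoin n x y)" using wjoin_props by blast
lemma J_least: "x \<in> perms n \<Longrightarrow> y \<in> perms n \<Longrightarrow> w \<in> perms n \<Longrightarrow> weak_le x w \<Longrightarrow> weak_le y w \<Longrightarrow> weak_le (wjoin n x y) w"
  using wjoin_props by blast
lemma M_in: "x \<in> perms n \<Longrightarrow> y \<in> perms n \<Longrightarrow> wmeet n x y \<in> perms n" using wmeet_props by blast
lemma M_lb1: "x \<in> perms n \<Longrightarrow> y \<in> perms n \<Longrightarrow> weak_le (wmeet n x y) x" using wmeet_props by blast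
lemma M_lb2: "x \<in> perms n \<Longrightarrow> y \<in> perms n \<Longrightarrow> weak_le (wmeet n x y) y" using wmeet_props by blast
lemma M_greatest: "x \<in> perms n \<Longrightarrow> y \<in> perms n \<Longrightarrow> w \<in> perms n \<Longrightarrow> weak_le w x \<Longrightarrow> weak_le w y \<Longrightarrow> weak_le w (wmeet n x y)"
  using wmeet_props by blast

lemma J_le: "x \<in> perms n \<Longrightarrow> y \<in> perms n \<Longrightarrow> weak_le x y \<Longrightarrow> wjoin n x y = y"
  using wjoin_eqI[of x n y y] by simp
lemma J_le': "x \<in> perms n \<Longrightarrow> y \<in> perms n \<Longrightarrow> weak_le x y \<Longrightarrow> wjoin n y x = y"
  using wjoin_eqI[of y n x y] by simp
lemma J_comm: assumes "x \<in> perms n" "y \<in> perms n" shows "wjoin n x y = wjoin n y x"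
  by (rule wjoin_eqI[OF assms J_in[OF assms(2,1)] J_ub2[OF assms(2,1)] J_ub1[OF assms(2,1)] J_least[OF assms(2,1)]])
lemma M_le: "x \<in> perms n \<Longrightarrow> y \<in> perms n \<Longrightarrow> weak_le x y \<Longrightarrow> wmeet n x y = x"
  using wmeet_eqI[of x n y x] by simp
lemma M_le': "x \<in> perms n \<Longrightarrow> y \<in> perms n \<Longrightarrow> weak_le x y \<Longrightarrow> wmeet n y x = x"
  using wmeet_eqI[of y n x x] by simp
lemma M_comm: assumes "x \<in> perms n" "y \<in> perms n" shows "wmeet n x y = wmeet n y x"
  by (rule wmeet_eqI[OF assms M_in[OF assms(2,1)] M_lb2[OF assms(2,1)] M_lb1[OF assms(2,1)] M_greatest[OF assms(2,1)]])

lemma finite_perms: "finite (perms n)"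
proof -
  have "perms n \<subseteq> {xs. set xs \<subseteq> {1..n} \<and> length xs = n}" unfolding perms_def by auto
  then show ?thesis using finite_lists_length_eq[of "{1..n}" n] finite_subset by auto
qed



locale LC =
  fixes n :: nat and R :: "(nat list \<times> nat list) set"
  assumes cong: "lattice_congruence n R"
begin

lemma eqv: "equiv (perms n) R" using cong unfolding lattice_congruence_def by blast
lemma R_in: "(x, y) \<in> R \<Longrightarrow> x \<in> perms n \<and> y \<in> perms n"
  using eqv unfolding equiv_def refl_on_def by blast
lemma R_refl: "x \<in> perms n \<Longrightarrow> (x, x) \<in> R" using eqv unfolding equiv_def refl_on_def by blast
lemma R_sym: "(x, y) \<in> R \<Longrightarrow> (y, x) \<in> R" using eqv unfolding equiv_def sym_def by blast
lemma R_trans: "(x, y) \<in> R \<Longrightarrow> (y, z) \<in> R \<Longrightarrow> (x, z) \<in> R" using eqv unfolding equiv_def trans_def by blast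

lemma cJ1: "(x, y) \<in> R \<Longrightarrow> z \<in> perms n \<Longrightarrow> (wjoin n x z, wjoin n y z) \<in> R"
  using cong R_in unfolding lattice_congruence_def by blast
lemma cM1: "(x, y) \<in> R \<Longrightarrow> z \<in> perms n \<Longrightarrow> (wmeet n x z, wmeet n y z) \<in> R"
  using cong R_in unfolding lattice_congruence_def by blast
lemma cJ2: assumes "(x, y) \<in> R" "z \<in> perms n" shows "(wjoin n z x, wjoin n z y) \<in> R"
proof -
  have "x \<in> perms n" "y \<in> perms n" using R_in assms by auto
  then show ?thesis using cJ1[OF assms] J_comm assms(2) by metis
qed
lemma cM2: assumes "(x, y) \<in> R" "z \<in> perms n" shows "(wmeet n z x, wmeet n z y) \<in> R"
proof -
  have "x \<in> perms n" "y \<in> perms n" using R_in assms by auto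
  then show ?thesis using cM1[OF assms] M_comm assms(2) by metis
qed

lemma convex: assumes "(x, y) \<in> R" "z \<in> perms n" "weak_le x z" "weak_le z y" shows "(x, z) \<in> R"
proof -
  have xy: "x \<in> perms n" "y \<in> perms n" using R_in assms(1) by auto
  have "wmeet n z y = z" using M_le[OF assms(2) xy(2) assms(4)] .
  moreover have "wmeet n z x = x" using M_le'[OF xy(1) assms(2) assms(3)] .
  ultimately show ?thesis using cM2[OF assms(1,2)] by simp
qed

lemma qle_iff: assumes x: "x \<in> perms n" and y: "y \<in> perms n"
  shows "qle n R (R``{x}) (R``{y}) \<longleftrightarrow> (wjoin n x y, y) \<in> R"
proof
  assume "qle n R (R``{x}) (R``{y})"
  then obtain x1 y1 where h: "(x, x1) \<in> R" "(y, y1) \<in> R" "(wjoin n x1 y1, y1) \<in> R"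
    unfolding qle_def by blast
  have "(wjoin n x y, wjoin n x1 y) \<in> R" using cJ1[OF h(1) y] .
  moreover have "(wjoin n x1 y, wjoin n x1 y1) \<in> R" using cJ2[OF h(2)] R_in h(1) by blast
  ultimately have "(wjoin n x y, y1) \<in> R" using h(3) R_trans by blast
  then show "(wjoin n x y, y) \<in> R" using h(2) R_trans R_sym by blast
next
  assume "(wjoin n x y, y) \<in> R"
  then show "qle n R (R``{x}) (R``{y})" unfolding qle_def using R_refl x y by blast
qed

lemma qle_le: "x \<in> perms n \<Longrightarrow> y \<in> perms n \<Longrightarrow> weak_le x y \<Longrightarrow> qle n R (R``{x}) (R``{y})"
  using qle_iff J_le R_refl by simp

lemma quot_cls: "X \<in> perms n // R \<Longrightarrow> \<exists>x \<in> perms n. X = R``{x}"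
  by (auto elim!: quotientE)

lemma cls_in_quot: "x \<in> perms n \<Longrightarrow> R``{x} \<in> perms n // R"
  by (rule quotientI)

lemma cls_eq_iff: "x \<in> perms n \<Longrightarrow> y \<in> perms n \<Longrightarrow> R``{x} = R``{y} \<longleftrightarrow> (x, y) \<in> R"
  using equiv_class_eq_iff[OF eqv] by blast

lemma cover_q: assumes w: "w \<in> perms n" and u: "up n w k" and nr: "(w, swap_adj w k) \<notin> R"
  shows "qcover n R (R``{w}) (R``{swap_adj w k})"
proof -
  let ?w' = "swap_adj w k"
  have w': "?w' \<in> perms n" using up_perm[OF w u] .
  have ne: "R``{w} \<noteq> R``{?w'}" using cls_eq_iff[OF w w'] nr by simp
  have le: "qle n R (R``{w}) (R``{?w'})" using qle_le[OF w w' up_le[OF w u]] .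
  have "\<not> (\<exists>Z\<in>perms n // R. Z \<noteq> R``{w} \<and> Z \<noteq> R``{?w'} \<and> qle n R (R``{w}) Z \<and> qle n R Z (R``{?w'}))"
  proof
    assume "\<exists>Z\<in>perms n // R. Z \<noteq> R``{w} \<and> Z \<noteq> R``{?w'} \<and> qle n R (R``{w}) Z \<and> qle n R Z (R``{?w'})"
    then obtain z where z: "z \<in> perms n" "R``{z} \<noteq> R``{w}" "R``{z} \<noteq> R``{?w'}"
      "qle n R (R``{w}) (R``{z})" "qle n R (R``{z}) (R``{?w'})"
      using quot_cls by metis
    have h1: "(wjoin n w z, z) \<in> R" using qle_iff[OF w z(1)] z(4) by blast
    have h2: "(wjoin n z ?w', ?w') \<in> R" using qle_iff[OF z(1) w'] z(5) by blast
    have jw: "wjoin n w z \<in> perms n" using J_in w z(1) by blast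
    have jz: "wjoin n z ?w' \<in> perms n" using J_in w' z(1) by blast
    let ?z2 = "wmeet n (wjoin n w z) ?w'"
    have z2: "?z2 \<in> perms n" using M_in[OF jw w'] .
    have a: "(?z2, wmeet n z ?w') \<in> R" using cM1[OF h1 w'] .
    have b: "(wmeet n z ?w', wmeet n z (wjoin n z ?w')) \<in> R" using cM2[OF R_sym[OF h2] z(1)] .
    have c: "wmeet n z (wjoin n z ?w') = z" using M_le[OF z(1) jz J_ub1[OF z(1) w']] .
    have zz: "(?z2, z) \<in> R" using a b c R_trans by metis
    have l1: "weak_le w ?z2" using M_greatest[OF jw w' w J_ub1[OF w z(1)] up_le[OF w u]] .
    have l2: "weak_le ?z2 ?w'" using M_lb2[OF jw w'] .
    have "?z2 = w \<or> ?z2 = ?w'" using cover_between[OF w u z2 l1 l2] .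
    then have "(z, w) \<in> R \<or> (z, ?w') \<in> R" using zz R_sym by metis
    then show False using z(2,3) cls_eq_iff z(1) w w' by metis
  qed
  then show ?thesis unfolding qcover_def using ne le by blast
qed

lemma qanti: assumes "(x, x') \<in> R" "(y, y') \<in> R" "weak_le x y'" "weak_le y x'" shows "(x, y) \<in> R"
proof -
  have p: "x \<in> perms n" "x' \<in> perms n" "y \<in> perms n" "y' \<in> perms n" using R_in assms by auto
  have "(wjoin n x y, wjoin n x y') \<in> R" using cJ2[OF assms(2) p(1)] .
  moreover have "wjoin n x y' = y'" using J_le[OF p(1) p(4) assms(3)] .
  ultimately have a: "(wjoin n x y, y) \<in> R" using assms(2) R_trans R_sym by metis
  have "(wjoin n x y, wjoin n x' y) \<in> R" using cJ1[OF assms(1) p(3)] .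
  moreover have "wjoin n x' y = x'" using J_le'[OF p(3) p(2) assms(4)] .
  ultimately have b: "(wjoin n x y, x) \<in> R" using assms(1) R_trans R_sym by metis
  show ?thesis using a b R_trans R_sym by metis
qed

lemma top_exists: assumes x: "x \<in> perms n" shows "\<exists>t. (x, t) \<in> R \<and> (\<forall>u. (x, u) \<in> R \<longrightarrow> weak_le u t)"
proof -
  let ?S = "R``{x}"
  have fS: "finite ?S" using finite_perms R_in by (metis finite_subset Image_singleton_iff subsetI)
  have neS: "?S \<noteq> {}" using R_refl x by blast
  let ?f = "\<lambda>u. card (invs u)"
  have "Max (?f ` ?S) \<in> ?f ` ?S" using Max_in[of "?f ` ?S"] fS neS by simp
  then obtain t where t0: "Max (?f ` ?S) = ?f t" "t \<in> ?S" by (rule imageE)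
  then have t: "t \<in> ?S" "?f t = Max (?f ` ?S)" by simp_all
  have mx: "?f u \<le> ?f t" if "u \<in> ?S" for u using t(2) Max_ge fS that by simp
  have "weak_le u t" if "(x, u) \<in> R" for u
  proof -
    have xt: "(x, t) \<in> R" using t by simp
    have ut: "(u, t) \<in> R" using that xt R_sym R_trans by blast
    have tp: "t \<in> perms n" "u \<in> perms n" using R_in ut by auto
    let ?j = "wjoin n u t"
    have "(?j, wjoin n t t) \<in> R" using cJ1[OF ut tp(1)] .
    moreover have "wjoin n t t = t" using J_le[OF tp(1) tp(1)] by simp
    ultimately have "(?j, t) \<in> R" by simp
    then have "?j \<in> ?S" using xt R_sym R_trans by blast
    then have "?f ?j \<le> ?f t" using mx by blast
    moreover have "invs t \<subseteq> invs ?j" using J_ub2[OF tp(2) tp(1)] unfolding weak_le_def .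
    moreover have "?f t \<le> ?f ?j" using card_mono[OF finite_invs \<open>invs t \<subseteq> invs ?j\<close>] .
    ultimately have "invs t = invs ?j" using card_subset_eq[OF finite_invs \<open>invs t \<subseteq> invs ?j\<close>] by simp
    then have "?j = t" using invs_inj J_in tp by metis
    then show ?thesis using J_ub1[OF tp(2) tp(1)] by simp
  qed
  then show ?thesis using t by blast
qed

end



lemma swap_nth_n: "w \<in> perms n \<Longrightarrow> Suc k < n \<Longrightarrow> m < n \<Longrightarrow>
   swap_adj w k ! m = (if m = k then w ! Suc k else if m = Suc k then w ! k else w ! m)"
  using swap_nth perms_len by metis

lemma join_two: assumes u: "u \<in> perms n" and a: "a \<in> perms n" and b: "b \<in> perms n" and c: "c \<in> perms n"
  and ia: "invs a = insert pa (invs u)" and ib: "invs b = insert pb (invs u)"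
  and ic: "invs c = insert pa (insert pb (invs u))"
  shows "wjoin n a b = c"
proof (rule wjoin_eqI[OF a b c])
  show "weak_le a c" "weak_le b c" unfolding weak_le_def ia ib ic by auto
  fix w assume "w \<in> perms n" "weak_le a w" "weak_le b w"
  then show "weak_le c w" unfolding weak_le_def ia ib ic by auto
qed

lemma join_hex: assumes u: "u \<in> perms n" and a: "a \<in> perms n" and b: "b \<in> perms n" and c: "c \<in> perms n"
  and ia: "invs a = insert (p, q) (invs u)" and ib: "invs b = insert (q, r) (invs u)"
  and ic: "invs c = insert (p, q) (insert (q, r) (insert (p, r) (invs u)))"
  shows "wjoin n a b = c"
proof (rule wjoin_eqI[OF a b c])
  show "weak_le a c" "weak_le b c" unfolding weak_le_def ia ib ic by auto
  fix w assume w: "w \<in> perms n" "weak_le a w" "weak_le b w"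
  then have h: "(p, q) \<in> invs w" "(q, r) \<in> invs w" "invs u \<subseteq> invs w" unfolding weak_le_def ia ib by auto
  have "(p, r) \<in> invs w" using invs_biclosed[OF w(1)] h unfolding biclosed_def by blast
  then show "weak_le c w" unfolding weak_le_def ic using h by auto
qed

lemma meet_hex: assumes u: "u \<in> perms n" and a: "a \<in> perms n" and b: "b \<in> perms n"
  and ia: "invs a = insert x (insert y (invs u))" and ib: "invs b = insert z (invs u)"
  and d: "z \<noteq> x" "z \<noteq> y" "z \<notin> invs u"
  shows "wmeet n a b = u"
proof (rule wmeet_eqI[OF a b u])
  show "weak_le u a" "weak_le u b" unfolding weak_le_def ia ib by auto
  fix w assume w: "w \<in> perms n" "weak_le w a" "weak_le w b"
  then have "invs w \<subseteq> insert x (insert y (invs u))" "invs w \<subseteq> insert z (invs u)"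
    unfolding weak_le_def ia ib by auto
  then show "weak_le w u" unfolding weak_le_def using d by auto
qed

context LC begin

lemma edge_pair:
  assumes t: "t \<in> perms n" and tt: "\<forall>u. (t, u) \<in> R \<longrightarrow> weak_le u t"
  shows "(t, u) \<in> R \<Longrightarrow> up n u k \<Longrightarrow> (t, swap_adj u k) \<notin> R \<Longrightarrow>
    \<exists>k'. up n t k' \<and> (swap_adj t k', swap_adj u k) \<in> R \<and> pr t k' = pr u k"
proof (induction "card (invs t) - card (invs u)" arbitrary: u k rule: less_induct)
  case less
  have u: "u \<in> perms n" using R_in less.prems(1) by blast
  have ut: "weak_le u t" using tt less.prems(1) by blast
  have lu: "length u = n" using perms_len u by blast
  have IH: "\<exists>k'. up n t k' \<and> (swap_adj t k', swap_adj c m) \<in> R \<and> pr t k' = pr c m"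
    if "(t, c) \<in> R" "up n c m" "(t, swap_adj c m) \<notin> R" "card (invs u) < card (invs c)" for c m
  proof -
    have "weak_le c t" using tt that(1) by blast
    then have "card (invs c) \<le> card (invs t)" unfolding weak_le_def using card_mono finite_invs by blast
    then have "card (invs t) - card (invs c) < card (invs t) - card (invs u)" using that(4) by linarith
    then show ?thesis using less.hyps that(1-3) by blast
  qed
  show ?case
  proof (cases "u = t")
    case True
    then show ?thesis using less.prems R_refl up_perm u by blast
  next
    case False
    obtain j where j: "up n u j" "weak_le (swap_adj u j) t" using exists_up[OF u t ut False] by blast
    let ?v = "swap_adj u j"
    have v: "?v \<in> perms n" using up_perm[OF u j(1)] .
    have uv: "(u, ?v) \<in> R" using convex[OF R_sym[OF less.prems(1)] v up_le[OF u j(1)] j(2)] .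
    have tv: "(t, ?v) \<in> R" using less.prems(1) uv R_trans by blast
    have jk: "j \<noteq> k" using tv less.prems(3) by blast
    let ?u' = "swap_adj u k"
    have u': "?u' \<in> perms n" using up_perm[OF u less.prems(2)] .
    have iu': "invs ?u' = insert (pr u k) (invs u)" using up_invs[OF u less.prems(2)] .
    have iv: "invs ?v = insert (pr u j) (invs u)" using up_invs[OF u j(1)] .
    have cv: "card (invs ?v) = Suc (card (invs u))" using up_card[OF u j(1)] .
    have nk: "Suc k < n" "u!k < u!Suc k" using less.prems(2) unfolding up_def by auto
    have nj: "Suc j < n" "u!j < u!Suc j" using j(1) unfolding up_def by auto
    have u'u: "wjoin n ?u' u = ?u'" using J_le'[OF u u' up_le[OF u less.prems(2)]] .
    consider "Suc j < k \<or> Suc k < j" | "j = Suc k" | "k = Suc j" using jk by linarith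
    then show ?thesis
    proof cases
      case 1
      let ?top = "swap_adj ?v k"
      have vk: "?v!k = u!k" "?v!Suc k = u!Suc k" using swap_nth_n[OF u nj(1)] 1 nk by auto
      have upv: "up n ?v k" using vk nk unfolding up_def by simp
      have prv: "pr ?v k = pr u k" unfolding pr_def using vk by simp
      have top: "?top \<in> perms n" using up_perm[OF v upv] .
      have itop: "invs ?top = insert (pr u k) (insert (pr u j) (invs u))"
        using up_invs[OF v upv] prv iv by simp
      have "wjoin n ?u' ?v = ?top" using join_two[OF u u' v top iu' iv itop] .
      moreover have "(wjoin n ?u' ?v, wjoin n ?u' u) \<in> R" using cJ2[OF R_sym[OF uv] u'] .
      ultimately have topu': "(?top, ?u') \<in> R" using u'u by simp
      have "(t, ?top) \<notin> R" using topu' less.prems(3) R_trans by blast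
      then obtain k' where k': "up n t k'" "(swap_adj t k', ?top) \<in> R" "pr t k' = pr ?v k"
        using IH[OF tv upv] cv by auto
      then show ?thesis using topu' R_trans prv by metis
    next
      case 2
      let ?p = "u!k" and ?q = "u!Suc k" and ?r = "u!Suc (Suc k)"
      have n2: "Suc (Suc k) < n" using nj 2 by simp
      have pqr: "?p < ?q" "?q < ?r" using nk nj 2 by auto
      let ?c2 = "swap_adj ?v k"
      let ?top = "swap_adj ?c2 (Suc k)"
      have vv: "?v!k = ?p" "?v!Suc k = ?r" "?v!Suc (Suc k) = ?q"
        using swap_nth_n[OF u nj(1)] 2 n2 by auto
      have upv: "up n ?v k" using vv pqr n2 unfolding up_def by simp
      have c2: "?c2 \<in> perms n" using up_perm[OF v upv] .
      have cc: "?c2!k = ?r" "?c2!Suc k = ?p" "?c2!Suc (Suc k) = ?q"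
        using swap_nth_n[OF v nk(1)] vv n2 by auto
      have upc: "up n ?c2 (Suc k)" using cc pqr n2 unfolding up_def by simp
      have top: "?top \<in> perms n" using up_perm[OF c2 upc] .
      have prs: "pr u k = (?p, ?q)" "pr u j = (?q, ?r)" "pr ?v k = (?p, ?r)" "pr ?c2 (Suc k) = (?p, ?q)"
        unfolding pr_def using vv cc 2 by auto
      have ic2: "invs ?c2 = insert (?p, ?r) (insert (?q, ?r) (invs u))"
        using up_invs[OF v upv] prs iv by simp
      have itop: "invs ?top = insert (?p, ?q) (insert (?q, ?r) (insert (?p, ?r) (invs u)))"
        using up_invs[OF c2 upc] prs ic2 by auto
      have "wjoin n ?u' ?v = ?top" using join_hex[OF u u' v top _ _ itop] iu' iv prs by simp
      moreover have "(wjoin n ?u' ?v, wjoin n ?u' u) \<in> R" using cJ2[OF R_sym[OF uv] u'] .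
      ultimately have topu': "(?top, ?u') \<in> R" using u'u by simp
      have nin: "(?p, ?q) \<notin> invs u" using up_notin[OF u less.prems(2)] prs by simp
      have m: "wmeet n ?c2 ?u' = u"
        using meet_hex[OF u c2 u' ic2, of "(?p, ?q)"] iu' prs nin pqr by auto
      have "weak_le ?c2 ?top" using up_le[OF c2 upc] .
      then have "wmeet n ?c2 ?top = ?c2" using M_le[OF c2 top] by simp
      moreover have "(wmeet n ?c2 ?top, wmeet n ?c2 ?u') \<in> R" using cM2[OF topu' c2] .
      ultimately have c2u: "(?c2, u) \<in> R" using m by simp
      have tc2: "(t, ?c2) \<in> R" using less.prems(1) c2u R_trans R_sym by blast
      have "(t, ?top) \<notin> R" using topu' less.prems(3) R_trans by blast
      moreover have "card (invs u) < card (invs ?c2)"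
        using up_card[OF v upv] cv by simp
      ultimately obtain k' where k': "up n t k'" "(swap_adj t k', ?top) \<in> R" "pr t k' = pr ?c2 (Suc k)"
        using IH[OF tc2 upc] by blast
      then show ?thesis using topu' R_trans prs by metis
    next
      case 3
      let ?p = "u!j" and ?q = "u!Suc j" and ?r = "u!Suc (Suc j)"
      have n2: "Suc (Suc j) < n" using nk 3 by simp
      have pqr: "?p < ?q" "?q < ?r" using nk nj 3 by auto
      let ?a2 = "swap_adj ?v (Suc j)"
      let ?top = "swap_adj ?a2 j"
      have vv: "?v!j = ?q" "?v!Suc j = ?p" "?v!Suc (Suc j) = ?r"
        using swap_nth_n[OF u nj(1)] n2 by auto
      have upv: "up n ?v (Suc j)" using vv pqr n2 unfolding up_def by simp
      have a2: "?a2 \<in> perms n" using up_perm[OF v upv] .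
      have aa: "?a2!j = ?q" "?a2!Suc j = ?r" "?a2!Suc (Suc j) = ?p"
        using swap_nth_n[OF v n2] vv n2 by auto
      have upa: "up n ?a2 j" using aa pqr n2 unfolding up_def by simp
      have top: "?top \<in> perms n" using up_perm[OF a2 upa] .
      have prs: "pr u k = (?q, ?r)" "pr u j = (?p, ?q)" "pr ?v (Suc j) = (?p, ?r)" "pr ?a2 j = (?q, ?r)"
        unfolding pr_def using vv aa 3 by auto
      have ia2: "invs ?a2 = insert (?p, ?r) (insert (?p, ?q) (invs u))"
        using up_invs[OF v upv] prs iv by simp
      have itop: "invs ?top = insert (?p, ?q) (insert (?q, ?r) (insert (?p, ?r) (invs u)))"
        using up_invs[OF a2 upa] prs ia2 by auto
      have "wjoin n ?v ?u' = ?top" using join_hex[OF u v u' top _ _ itop] iu' iv prs by simp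
      then have "wjoin n ?u' ?v = ?top" using J_comm[OF u' v] by simp
      moreover have "(wjoin n ?u' ?v, wjoin n ?u' u) \<in> R" using cJ2[OF R_sym[OF uv] u'] .
      ultimately have topu': "(?top, ?u') \<in> R" using u'u by simp
      have nin: "(?q, ?r) \<notin> invs u" using up_notin[OF u less.prems(2)] prs by simp
      have m: "wmeet n ?a2 ?u' = u"
        using meet_hex[OF u a2 u' ia2, of "(?q, ?r)"] iu' prs nin pqr by auto
      have "weak_le ?a2 ?top" using up_le[OF a2 upa] .
      then have "wmeet n ?a2 ?top = ?a2" using M_le[OF a2 top] by simp
      moreover have "(wmeet n ?a2 ?top, wmeet n ?a2 ?u') \<in> R" using cM2[OF topu' a2] .
      ultimately have a2u: "(?a2, u) \<in> R" using m by simp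
      have ta2: "(t, ?a2) \<in> R" using less.prems(1) a2u R_trans R_sym by blast
      have "(t, ?top) \<notin> R" using topu' less.prems(3) R_trans by blast
      moreover have "card (invs u) < card (invs ?a2)"
        using up_card[OF v upv] cv by simp
      ultimately obtain k' where k': "up n t k'" "(swap_adj t k', ?top) \<in> R" "pr t k' = pr ?a2 j"
        using IH[OF ta2 upa] by blast
      then show ?thesis using topu' R_trans prs by metis
    qed
  qed
qed

end



lemma conn_card:
  assumes "finite V" "finite E"
    and "\<And>S. S \<subseteq> V \<Longrightarrow> S \<noteq> {} \<Longrightarrow> S \<noteq> V \<Longrightarrow> \<exists>c d. (c, d) \<in> E \<and> c \<in> V \<and> d \<in> V \<and> (c \<in> S) \<noteq> (d \<in> S)"
  shows "card V \<le> card E + 1"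
  using assms
proof (induction "card E" arbitrary: E V rule: less_induct)
  case less
  show ?case
  proof (cases "E = {}")
    case True
    show ?thesis
    proof (rule ccontr)
      assume "\<not> card V \<le> card E + 1"
      then have "card V \<ge> 2" using True by simp
      then obtain v where v: "v \<in> V" by (metis card.empty ex_in_conv not_numeral_le_zero)
      have "{v} \<noteq> V" using \<open>card V \<ge> 2\<close> by auto
      then show False using less.prems(3)[of "{v}"] v True by auto
    qed
  next
    case False
    then obtain x y where e: "(x, y) \<in> E" by auto
    let ?F = "E - {(x, y)}"
    have fF: "finite ?F" using less.prems(2) by simp
    have cF2: "card E = Suc (card ?F)" using card_Suc_Diff1[OF less.prems(2) e] by simp
    have cF: "card ?F < card E" using cF2 by simp
    show ?thesis
    proof (cases "x \<in> V \<and> y \<in> V \<and> x \<noteq> y")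
      case False
      have "\<exists>c d. (c, d) \<in> ?F \<and> c \<in> V \<and> d \<in> V \<and> (c \<in> S) \<noteq> (d \<in> S)"
        if hS: "S \<subseteq> V" "S \<noteq> {}" "S \<noteq> V" for S
      proof -
        obtain c d where cd: "(c, d) \<in> E" "c \<in> V" "d \<in> V" "(c \<in> S) \<noteq> (d \<in> S)"
          using less.prems(3)[OF hS] by blast
        have "(c, d) \<noteq> (x, y)" using False cd by auto
        then show ?thesis using cd by blast
      qed
      then have "card V \<le> card ?F + 1" using less.hyps[OF cF less.prems(1) fF] by blast
      then show ?thesis using cF by simp
    next
      case True
      define g where "g = (\<lambda>z. if z = y then x else z)"
      let ?V' = "V - {y}"
      let ?F' = "(\<lambda>(c, d). (g c, g d)) ` ?F"
      have fF': "finite ?F'" using fF by simp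
      have cF': "card ?F' \<le> card ?F" using card_image_le fF by blast
      have fV': "finite ?V'" using less.prems(1) by simp
      have hyp': "\<exists>c d. (c, d) \<in> ?F' \<and> c \<in> ?V' \<and> d \<in> ?V' \<and> (c \<in> S') \<noteq> (d \<in> S')"
        if S': "S' \<subseteq> ?V'" "S' \<noteq> {}" "S' \<noteq> ?V'" for S'
      proof -
        define S where "S = (if x \<in> S' then insert y S' else S')"
        have yS: "y \<in> S \<longleftrightarrow> x \<in> S'" unfolding S_def using S' by auto
        have oS: "z \<in> S \<longleftrightarrow> z \<in> S'" if "z \<noteq> y" for z unfolding S_def using that by auto
        have "S \<subseteq> V" unfolding S_def using S' True by auto
        moreover have "S \<noteq> {}" unfolding S_def using S' by auto
        moreover have "S \<noteq> V"
        proof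
          assume SV: "S = V"
          show False
          proof (cases "x \<in> S'")
            case True
            then have "S' = ?V'" using SV S'(1) unfolding S_def by auto
            then show False using S'(3) by simp
          next
            case False
            then have "x \<notin> S" using oS \<open>x \<in> V \<and> y \<in> V \<and> x \<noteq> y\<close> by auto
            then show False using SV \<open>x \<in> V \<and> y \<in> V \<and> x \<noteq> y\<close> by auto
          qed
        qed
        ultimately obtain c d where cd: "(c, d) \<in> E" "c \<in> V" "d \<in> V" "(c \<in> S) \<noteq> (d \<in> S)"
          using less.prems(3) by blast
        have "(c, d) \<noteq> (x, y)" using cd yS oS True by auto
        then have cdF: "(c, d) \<in> ?F" using cd by blast
        have gS: "g z \<in> S' \<longleftrightarrow> z \<in> S" for z unfolding g_def using yS oS by auto
        have gV: "z \<in> V \<Longrightarrow> g z \<in> ?V'" for z unfolding g_def using True by auto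
        have "(g c, g d) \<in> ?F'" using cdF by force
        then show ?thesis using gS gV cd by blast
      qed
      have "card ?V' \<le> card ?F' + 1" using less.hyps[OF _ fV' fF' hyp'] cF' cF by fastforce
      moreover have "card V = Suc (card ?V')" using card_Suc_Diff1[OF less.prems(1), of y] True by simp
      ultimately show ?thesis using cF' cF2 by simp
    qed
  qed
qed

lemma boundary: assumes "S \<subseteq> {1..n}" "S \<noteq> {}" "S \<noteq> {1..n}"
  shows "\<exists>a. 1 \<le> a \<and> Suc a \<le> n \<and> (a \<in> S) \<noteq> (Suc a \<in> S)"
proof (rule ccontr)
  assume "\<not> ?thesis"
  then have h: "\<And>a. 1 \<le> a \<Longrightarrow> Suc a \<le> n \<Longrightarrow> (a \<in> S) = (Suc a \<in> S)" by blast
  have all: "\<And>a. 1 \<le> a \<Longrightarrow> a \<le> n \<Longrightarrow> (a \<in> S) = (1 \<in> S)"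
  proof -
    fix a show "1 \<le> a \<Longrightarrow> a \<le> n \<Longrightarrow> (a \<in> S) = (1 \<in> S)"
    proof (induction a)
      case 0 then show ?case by simp
    next
      case (Suc a)
      show ?case
      proof (cases "a = 0")
        case True then show ?thesis by simp
      next
        case False
        then have "(a \<in> S) = (1 \<in> S)" using Suc by simp
        then show ?thesis using h[of a] False Suc.prems by simp
      qed
    qed
  qed
  show False
  proof (cases "1 \<in> S")
    case True
    then have "{1..n} \<subseteq> S" using all by auto
    then show False using assms by auto
  next
    case False
    then have "S = {}" using all assms(1) by auto
    then show False using assms by simp
  qed
qed



lemma shift:
  assumes Z: "Z \<subseteq> perms n"
    and clos: "\<And>w j. w \<in> Z \<Longrightarrow> Suc j < n \<Longrightarrow> (w!j \<in> S) \<noteq> (w!Suc j \<in> S) \<Longrightarrow> swap_adj w j \<in> Z"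
    and jn: "j < n"
  shows "w \<in> Z \<Longrightarrow> k + d = j - 1 \<Longrightarrow> k < j \<Longrightarrow> (w!k \<in> S) = A \<Longrightarrow>
    (\<forall>m. k < m \<and> m \<le> j \<longrightarrow> (w!m \<in> S) \<noteq> A) \<Longrightarrow>
    \<exists>w'\<in>Z. w'!(j - 1) = w!k \<and> (\<forall>m<n. (m < k \<or> j \<le> m) \<longrightarrow> w'!m = w!m)"
proof (induction d arbitrary: w k)
  case 0
  then have "k = j - 1" by simp
  then show ?case using 0 by blast
next
  case (Suc d)
  have w: "w \<in> perms n" using Suc.prems(1) Z by blast
  have kj: "Suc k < j" using Suc.prems(2,3) by simp
  have kn: "Suc k < n" using kj jn by simp
  have cr: "(w!k \<in> S) \<noteq> (w!Suc k \<in> S)" using Suc.prems(4,5) kj by auto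
  let ?w1 = "swap_adj w k"
  have w1: "?w1 \<in> Z" using clos[OF Suc.prems(1) kn cr] .
  have w1n: "?w1 ! m = (if m = k then w ! Suc k else if m = Suc k then w ! k else w ! m)" if "m < n" for m
    using swap_nth_n[OF w kn that] .
  have a: "(?w1 ! Suc k \<in> S) = A" using w1n kn Suc.prems(4) by simp
  have b: "\<forall>m. Suc k < m \<and> m \<le> j \<longrightarrow> (?w1!m \<in> S) \<noteq> A"
  proof (intro allI impI)
    fix m assume m: "Suc k < m \<and> m \<le> j"
    then have "?w1!m = w!m" using w1n jn by simp
    then show "(?w1!m \<in> S) \<noteq> A" using Suc.prems(5) m by simp
  qed
  obtain w' where w': "w' \<in> Z" "w'!(j - 1) = ?w1!Suc k" "\<forall>m<n. (m < Suc k \<or> j \<le> m) \<longrightarrow> w'!m = ?w1!m"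
    using Suc.IH[OF w1 _ kj a b] Suc.prems(2) by auto
  have "w'!(j - 1) = w!k" using w'(2) w1n kn by simp
  moreover have "\<forall>m<n. (m < k \<or> j \<le> m) \<longrightarrow> w'!m = w!m"
  proof (intro allI impI)
    fix m assume m: "m < n" "m < k \<or> j \<le> m"
    then have "w'!m = ?w1!m" using w'(3) by auto
    then show "w'!m = w!m" using w1n m kj by auto
  qed
  ultimately show ?case using w'(1) by blast
qed

lemma move:
  assumes Z: "Z \<subseteq> perms n"
    and clos: "\<And>w j. w \<in> Z \<Longrightarrow> Suc j < n \<Longrightarrow> (w!j \<in> S) \<noteq> (w!Suc j \<in> S) \<Longrightarrow> swap_adj w j \<in> Z"
  shows "w \<in> Z \<Longrightarrow> i < j \<Longrightarrow> j < n \<Longrightarrow> (w!i \<in> S) \<noteq> (w!j \<in> S) \<Longrightarrow>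
    \<exists>w'\<in>Z. \<exists>m. Suc m < n \<and> ((w'!m = w!i \<and> w'!Suc m = w!j) \<or> (w'!m = w!j \<and> w'!Suc m = w!i))"
proof (induction "j - i" arbitrary: w j rule: less_induct)
  case less
  show ?case
  proof (cases "j = Suc i")
    case True
    then show ?thesis using less.prems by blast
  next
    case False
    then have ij: "Suc i < j" using less.prems(2) by simp
    define A where "A = (w!i \<in> S)"
    define K where "K = {m. i \<le> m \<and> m < j \<and> (w!m \<in> S) = A}"
    have fK: "finite K" unfolding K_def by simp
    have iK: "i \<in> K" unfolding K_def A_def using less.prems by simp
    define k where "k = Max K"
    have kK: "k \<in> K" unfolding k_def using fK iK Max_in by blast
    then have k: "i \<le> k" "k < j" "(w!k \<in> S) = A" unfolding K_def by auto
    have after: "\<forall>m. k < m \<and> m \<le> j \<longrightarrow> (w!m \<in> S) \<noteq> A"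
    proof (intro allI impI)
      fix m assume m: "k < m \<and> m \<le> j"
      show "(w!m \<in> S) \<noteq> A"
      proof (cases "m = j")
        case True then show ?thesis using less.prems(4) A_def by simp
      next
        case False
        have "m \<notin> K" using m Max_ge[OF fK] k_def by fastforce
        then show ?thesis using m False k unfolding K_def by auto
      qed
    qed
    obtain w' where w': "w' \<in> Z" "w'!(j - 1) = w!k" "\<forall>m<n. (m < k \<or> j \<le> m) \<longrightarrow> w'!m = w!m"
      using shift[OF Z clos less.prems(3) less.prems(1) _ k(2) k(3) after, of "j - 1 - k"] k(2) by auto
    have wj: "w'!j = w!j" using w'(3) less.prems(3) by simp
    show ?thesis
    proof (cases "k = i")
      case True
      then show ?thesis using w' wj less.prems(3) ij
        by (intro bexI[OF _ w'(1)] exI[of _ "j - 1"]) auto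
    next
      case False
      then have ik: "i < k" using k by simp
      have wi: "w'!i = w!i" using w'(3) ik less.prems(3) k by auto
      have jn1: "Suc (j - 1) < n" using less.prems(3) ij by simp
      have cr: "(w'!(j - 1) \<in> S) \<noteq> (w'!Suc (j - 1) \<in> S)"
        using w'(2) wj k(2) k(3) after[rule_format, of j] ij by (simp add: Suc_diff_1)
      let ?w2 = "swap_adj w' (j - 1)"
      have w2: "?w2 \<in> Z" using clos[OF w'(1) jn1 cr] .
      have w'p: "w' \<in> perms n" using w'(1) Z by blast
      have w2n: "?w2!(j - 1) = w!j" "?w2!i = w!i"
        using swap_nth_n[OF w'p jn1] ij wj wi ik k less.prems(3) by auto
      have "j - 1 - i < j - i" using ij by simp
      moreover have "i < j - 1" "j - 1 < n" using ij less.prems(3) by auto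
      moreover have "(?w2!i \<in> S) \<noteq> (?w2!(j - 1) \<in> S)" using w2n less.prems(4) by simp
      ultimately obtain w3 m where "w3 \<in> Z" "Suc m < n"
        "(w3!m = ?w2!i \<and> w3!Suc m = ?w2!(j - 1)) \<or> (w3!m = ?w2!(j - 1) \<and> w3!Suc m = ?w2!i)"
        using less.hyps[OF _ w2] by blast
      then show ?thesis using w2n by auto
    qed
  qed
qed



definition idl :: "nat \<Rightarrow> nat list" where "idl n = map Suc [0..<n]"

lemma idl_nth: "i < n \<Longrightarrow> idl n ! i = Suc i" unfolding idl_def by simp

lemma idl_perm: "idl n \<in> perms n"
proof -
  have "set (idl n) = {1..n}"
  proof
    show "set (idl n) \<subseteq> {1..n}" unfolding idl_def by auto
    show "{1..n} \<subseteq> set (idl n)"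
    proof
      fix c assume "c \<in> {1..n}"
      then have "c - 1 < n" "Suc (c - 1) = c" by auto
      then show "c \<in> set (idl n)" unfolding idl_def by (metis atLeastLessThan_iff image_eqI set_map set_upt zero_le)
    qed
  qed
  moreover have "distinct (idl n)" unfolding idl_def by (simp add: distinct_map)
  moreover have "length (idl n) = n" unfolding idl_def by simp
  ultimately show ?thesis unfolding perms_def by simp
qed

lemma idl_invs: "invs (idl n) = {}"
  unfolding invs_def idl_def by auto

lemma idl_le: "weak_le (idl n) x" unfolding weak_le_def idl_invs by simp

lemma idl_up: "Suc k < n \<Longrightarrow> up n (idl n) k" unfolding up_def using idl_nth by simp

lemma idl_swap_invs: "Suc k < n \<Longrightarrow> invs (swap_adj (idl n) k) = {(Suc k, Suc (Suc k))}"
  using up_invs[OF idl_perm idl_up] idl_invs idl_nth unfolding pr_def by simp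

context LC begin

lemma same_class_pair:
  assumes w12: "(w1, w2) \<in> R" and u1: "up n w1 k1" and u2: "up n w2 k2"
    and n1: "(w1, swap_adj w1 k1) \<notin> R" and n2: "(w2, swap_adj w2 k2) \<notin> R"
    and s12: "(swap_adj w1 k1, swap_adj w2 k2) \<in> R"
  shows "pr w1 k1 = pr w2 k2"
proof -
  have w1: "w1 \<in> perms n" using R_in w12 by blast
  obtain t where t: "(w1, t) \<in> R" "\<forall>u. (w1, u) \<in> R \<longrightarrow> weak_le u t" using top_exists[OF w1] by blast
  have tp: "t \<in> perms n" using R_in t(1) by blast
  have tt: "\<forall>u. (t, u) \<in> R \<longrightarrow> weak_le u t" using t R_trans by blast
  have tw1: "(t, w1) \<in> R" using R_sym t(1) by blast
  have tw2: "(t, w2) \<in> R" using tw1 w12 R_trans by blast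
  have ns1: "(t, swap_adj w1 k1) \<notin> R" using n1 tw1 R_trans R_sym by blast
  have ns2: "(t, swap_adj w2 k2) \<notin> R" using n2 tw2 R_trans R_sym by blast
  obtain k1' where k1': "up n t k1'" "(swap_adj t k1', swap_adj w1 k1) \<in> R" "pr t k1' = pr w1 k1"
    using edge_pair[OF tp tt tw1 u1 ns1] by blast
  obtain k2' where k2': "up n t k2'" "(swap_adj t k2', swap_adj w2 k2) \<in> R" "pr t k2' = pr w2 k2"
    using edge_pair[OF tp tt tw2 u2 ns2] by blast
  have ss: "(swap_adj t k1', swap_adj t k2') \<in> R" using k1'(2) k2'(2) s12 R_trans R_sym by blast
  show ?thesis
  proof (cases "k1' = k2'")
    case True then show ?thesis using k1' k2' by simp
  next
    case False
    let ?s1 = "swap_adj t k1'" and ?s2 = "swap_adj t k2'"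
    have s1: "?s1 \<in> perms n" and s2: "?s2 \<in> perms n" using up_perm tp k1'(1) k2'(1) by auto
    have "pr t k1' \<noteq> pr t k2'"
    proof
      assume "pr t k1' = pr t k2'"
      then have "t!k1' = t!k2'" unfolding pr_def by simp
      moreover have "k1' < length t" "k2' < length t" using k1'(1) k2'(1) perms_len[OF tp] unfolding up_def by auto
      ultimately show False using False nth_eq_iff_index_eq perms_distinct[OF tp] by blast
    qed
    have i1: "invs ?s1 = insert (pr t k1') (insert (pr t k1') (invs t))" using up_invs[OF tp k1'(1)] by simp
    have i2: "invs ?s2 = insert (pr t k2') (invs t)" using up_invs[OF tp k2'(1)] .
    have m: "wmeet n ?s1 ?s2 = t"
      using meet_hex[OF tp s1 s2 i1 i2] \<open>pr t k1' \<noteq> pr t k2'\<close> up_notin[OF tp k2'(1)] by auto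
    have "(wmeet n ?s1 ?s2, wmeet n ?s1 ?s1) \<in> R" using cM2[OF R_sym[OF ss] s1] .
    moreover have "wmeet n ?s1 ?s1 = ?s1" using M_le[OF s1 s1] by simp
    ultimately have "(t, ?s1) \<in> R" using m by simp
    then have "(t, swap_adj w1 k1) \<in> R" using k1'(2) R_trans by blast
    then show ?thesis using ns1 by blast
  qed
qed

definition okw :: "nat list \<Rightarrow> nat list \<Rightarrow> nat \<Rightarrow> bool" where
  "okw x0 w k \<longleftrightarrow> w \<in> perms n \<and> up n w k \<and> ((x0, w) \<in> R \<longleftrightarrow> (x0, swap_adj w k) \<notin> R)"

definition Ed :: "nat list \<Rightarrow> (nat \<times> nat) set" where
  "Ed x0 = {pr w k | w k. okw x0 w k}"

definition nb :: "nat list \<Rightarrow> nat list \<Rightarrow> nat \<Rightarrow> nat list set" where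
  "nb x0 w k = (if (x0, w) \<in> R then R``{swap_adj w k} else R``{w})"

lemma okw_notR: "okw x0 w k \<Longrightarrow> (w, swap_adj w k) \<notin> R"
  unfolding okw_def using R_trans R_sym by blast

lemma nb_adj: assumes x0: "x0 \<in> perms n" and ok: "okw x0 w k"
  shows "nb x0 w k \<in> perms n // R \<and> qadj n R (R``{x0}) (nb x0 w k)"
proof -
  have w: "w \<in> perms n" and u: "up n w k" using ok unfolding okw_def by auto
  have s: "swap_adj w k \<in> perms n" using up_perm[OF w u] .
  have qc: "qcover n R (R``{w}) (R``{swap_adj w k})" using cover_q[OF w u okw_notR[OF ok]] .
  show ?thesis
  proof (cases "(x0, w) \<in> R")
    case True
    then have "R``{x0} = R``{w}" using cls_eq_iff x0 w by blast
    then show ?thesis using qc True cls_in_quot[OF s] unfolding nb_def qadj_def by simp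
  next
    case False
    then have "(x0, swap_adj w k) \<in> R" using ok unfolding okw_def by blast
    then have "R``{x0} = R``{swap_adj w k}" using cls_eq_iff x0 s by blast
    then show ?thesis using qc False cls_in_quot[OF w] unfolding nb_def qadj_def by simp
  qed
qed

lemma nb_inj: assumes x0: "x0 \<in> perms n" and ok1: "okw x0 w1 k1" and ok2: "okw x0 w2 k2"
  and eq: "nb x0 w1 k1 = nb x0 w2 k2"
  shows "pr w1 k1 = pr w2 k2"
proof -
  have w1: "w1 \<in> perms n" and u1: "up n w1 k1" using ok1 unfolding okw_def by auto
  have w2: "w2 \<in> perms n" and u2: "up n w2 k2" using ok2 unfolding okw_def by auto
  have s1: "swap_adj w1 k1 \<in> perms n" using up_perm[OF w1 u1] .
  have s2: "swap_adj w2 k2 \<in> perms n" using up_perm[OF w2 u2] .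
  have n1: "(w1, swap_adj w1 k1) \<notin> R" using okw_notR[OF ok1] .
  have n2: "(w2, swap_adj w2 k2) \<notin> R" using okw_notR[OF ok2] .
  consider "(x0, w1) \<in> R" "(x0, w2) \<in> R" | "(x0, w1) \<notin> R" "(x0, w2) \<notin> R"
    | "(x0, w1) \<in> R" "(x0, w2) \<notin> R" | "(x0, w1) \<notin> R" "(x0, w2) \<in> R" by blast
  then show ?thesis
  proof cases
    case 1
    then have "R``{swap_adj w1 k1} = R``{swap_adj w2 k2}" using eq unfolding nb_def by simp
    then have "(swap_adj w1 k1, swap_adj w2 k2) \<in> R" using cls_eq_iff s1 s2 by blast
    moreover have "(w1, w2) \<in> R" using 1 R_sym R_trans by blast
    ultimately show ?thesis using same_class_pair u1 u2 n1 n2 by blast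
  next
    case 2
    then have "R``{w1} = R``{w2}" using eq unfolding nb_def by simp
    then have "(w1, w2) \<in> R" using cls_eq_iff w1 w2 by blast
    moreover have "(x0, swap_adj w1 k1) \<in> R" "(x0, swap_adj w2 k2) \<in> R" using 2 ok1 ok2 unfolding okw_def by auto
    then have "(swap_adj w1 k1, swap_adj w2 k2) \<in> R" using R_sym R_trans by blast
    ultimately show ?thesis using same_class_pair u1 u2 n1 n2 by blast
  next
    case 3
    then have "R``{swap_adj w1 k1} = R``{w2}" using eq unfolding nb_def by simp
    then have a: "(w2, swap_adj w1 k1) \<in> R" using cls_eq_iff s1 w2 R_sym by blast
    have "(x0, swap_adj w2 k2) \<in> R" using 3 ok2 unfolding okw_def by auto
    then have b: "(w1, swap_adj w2 k2) \<in> R" using 3 R_sym R_trans by blast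
    have "(w1, w2) \<in> R" using qanti[OF b a up_le[OF w1 u1] up_le[OF w2 u2]] .
    then show ?thesis using 3 R_trans by blast
  next
    case 4
    then have "R``{w1} = R``{swap_adj w2 k2}" using eq unfolding nb_def by simp
    then have a: "(w1, swap_adj w2 k2) \<in> R" using cls_eq_iff s2 w1 by blast
    have "(x0, swap_adj w1 k1) \<in> R" using 4 ok1 unfolding okw_def by auto
    then have b: "(w2, swap_adj w1 k1) \<in> R" using 4 R_sym R_trans by blast
    have "(w2, w1) \<in> R" using qanti[OF b a up_le[OF w2 u2] up_le[OF w1 u1]] .
    then show ?thesis using 4 R_trans by blast
  qed
qed

lemma finite_quot: "finite (perms n // R)"
proof -
  have "R \<subseteq> perms n \<times> perms n" using R_in by (auto intro: subrelI)
  then show ?thesis using finite_quotient[OF finite_perms] by blast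
qed

lemma card_Ed_le: assumes x0: "x0 \<in> perms n" shows "card (Ed x0) \<le> qdegree n R (R``{x0})"
proof -
  let ?N = "{Y \<in> perms n // R. qadj n R (R``{x0}) Y}"
  define W where "W = (\<lambda>p. SOME wk. okw x0 (fst wk) (snd wk) \<and> pr (fst wk) (snd wk) = p)"
  define f where "f = (\<lambda>p. nb x0 (fst (W p)) (snd (W p)))"
  have Wp: "okw x0 (fst (W p)) (snd (W p)) \<and> pr (fst (W p)) (snd (W p)) = p" if hp: "p \<in> Ed x0" for p
  proof -
    obtain w k where "okw x0 w k" "pr w k = p" using hp unfolding Ed_def by blast
    then have "\<exists>wk. okw x0 (fst wk) (snd wk) \<and> pr (fst wk) (snd wk) = p" by (intro exI[of _ "(w, k)"]) simp
    then show ?thesis unfolding W_def by (rule someI_ex)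
  qed
  have "inj_on f (Ed x0)"
  proof (rule inj_onI)
    fix p q assume pq: "p \<in> Ed x0" "q \<in> Ed x0" "f p = f q"
    show "p = q" using nb_inj[OF x0 conjunct1[OF Wp[OF pq(1)]] conjunct1[OF Wp[OF pq(2)]]] pq(3) Wp pq(1,2)
      unfolding f_def by metis
  qed
  moreover have "f ` Ed x0 \<subseteq> ?N" using nb_adj[OF x0] Wp unfolding f_def by blast
  moreover have "finite ?N" using finite_quot by simp
  ultimately show ?thesis unfolding qdegree_def by (rule card_inj_on_le)
qed

end



locale LCE = LC +
  assumes ess: "essential n R"
begin

lemma atom_notR: assumes k: "Suc k < n" shows "(idl n, swap_adj (idl n) k) \<notin> R"
proof
  assume h: "(idl n, swap_adj (idl n) k) \<in> R"
  let ?s = "swap_adj (idl n) k"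
  have s: "?s \<in> perms n" using up_perm[OF idl_perm idl_up[OF k]] .
  have "fence n (Suc k) (Suc (Suc k)) {} \<subseteq> R"
  proof
    fix e assume "e \<in> fence n (Suc k) (Suc (Suc k)) {}"
    then obtain x j where e: "e = (x, swap_adj x j)" "x \<in> perms n" "Suc j < n"
      "x ! j = Suc k" "x ! Suc j = Suc (Suc k)" unfolding fence_def by blast
    have u: "up n x j" using e unfolding up_def by simp
    have prx: "pr x j = (Suc k, Suc (Suc k))" using e unfolding pr_def by simp
    have sx: "swap_adj x j \<in> perms n" using up_perm[OF e(2) u] .
    have ix: "invs (swap_adj x j) = insert (pr x j) (invs x)" using up_invs[OF e(2) u] .
    have "wjoin n x ?s = swap_adj x j"
    proof (rule wjoin_eqI[OF e(2) s sx])
      show "weak_le x (swap_adj x j)" using up_le[OF e(2) u] .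
      show "weak_le ?s (swap_adj x j)" unfolding weak_le_def ix idl_swap_invs[OF k] prx by simp
      fix w assume "w \<in> perms n" "weak_le x w" "weak_le ?s w"
      then show "weak_le (swap_adj x j) w" unfolding weak_le_def ix idl_swap_invs[OF k] prx by simp
    qed
    moreover have "wjoin n x (idl n) = x" using J_le'[OF idl_perm e(2) idl_le] .
    moreover have "(wjoin n x (idl n), wjoin n x ?s) \<in> R" using cJ2[OF h e(2)] .
    ultimately show "e \<in> R" using e(1) by simp
  qed
  then have "(Suc k, Suc (Suc k), {}) \<in> F_of n R" unfolding F_of_def using k by simp
  then show False using ess unfolding essential_def by blast
qed

lemma consec_notR: assumes x: "x \<in> perms n" and u: "up n x j" and c: "x ! Suc j = Suc (x ! j)"
  shows "(x, swap_adj x j) \<notin> R"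
proof
  assume h: "(x, swap_adj x j) \<in> R"
  have jn: "Suc j < n" using u unfolding up_def by simp
  have "x ! j \<in> set x" "x ! Suc j \<in> set x" using jn perms_len[OF x] by auto
  then have r: "1 \<le> x ! j" "x ! Suc j \<le> n" using perms_set[OF x] by auto
  define k where "k = x ! j - 1"
  have k1: "Suc k = x ! j" using r unfolding k_def by simp
  have kn: "Suc k < n" using r c k1 by simp
  let ?s = "swap_adj (idl n) k"
  have s: "?s \<in> perms n" using up_perm[OF idl_perm idl_up[OF kn]] .
  have iss: "invs ?s = {pr x j}" using idl_swap_invs[OF kn] k1 c unfolding pr_def by simp
  have sx: "swap_adj x j \<in> perms n" using up_perm[OF x u] .
  have ix: "invs (swap_adj x j) = insert (pr x j) (invs x)" using up_invs[OF x u] .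
  have nin: "pr x j \<notin> invs x" using up_notin[OF x u] .
  have m1: "wmeet n ?s x = idl n"
  proof (rule wmeet_eqI[OF s x idl_perm idl_le idl_le])
    fix w assume "w \<in> perms n" "weak_le w ?s" "weak_le w x"
    then have "invs w \<subseteq> {pr x j}" "invs w \<subseteq> invs x" unfolding weak_le_def iss by auto
    then have "invs w = {}" using nin by blast
    then show "weak_le w (idl n)" unfolding weak_le_def by simp
  qed
  have "weak_le ?s (swap_adj x j)" unfolding weak_le_def iss ix by simp
  then have m2: "wmeet n ?s (swap_adj x j) = ?s" using M_le[OF s sx] by simp
  have "(wmeet n ?s x, wmeet n ?s (swap_adj x j)) \<in> R" using cM2[OF h s] .
  then have "(idl n, ?s) \<in> R" using m1 m2 by simp
  then show False using atom_notR[OF kn] by simp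
qed

lemma card_Ed_ge: assumes x0: "x0 \<in> perms n" shows "card {1..n} \<le> card (Ed x0) + 1"
proof (rule conn_card)
  show "finite {1..n}" by simp
  have "Ed x0 \<subseteq> {1..n} \<times> {1..n}"
  proof
    fix p assume "p \<in> Ed x0"
    then obtain w k where wk: "p = pr w k" "okw x0 w k" unfolding Ed_def by blast
    then have w: "w \<in> perms n" "Suc k < n" unfolding okw_def up_def by auto
    then have "w ! k \<in> set w" "w ! Suc k \<in> set w" using perms_len[OF w(1)] by auto
    then show "p \<in> {1..n} \<times> {1..n}" using wk(1) perms_set[OF w(1)] unfolding pr_def by auto
  qed
  then show fE: "finite (Ed x0)" by (rule finite_subset) simp
  fix S assume S: "S \<subseteq> {1..n}" "S \<noteq> {}" "S \<noteq> {1..n}"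
  show "\<exists>c d. (c, d) \<in> Ed x0 \<and> c \<in> {1..n} \<and> d \<in> {1..n} \<and> (c \<in> S) \<noteq> (d \<in> S)"
  proof (rule ccontr)
    assume nc: "\<not> ?thesis"
    have noc: "(c \<in> S) = (d \<in> S)" if "(c, d) \<in> Ed x0" for c d
      using nc that \<open>Ed x0 \<subseteq> {1..n} \<times> {1..n}\<close> by blast
    let ?Z = "R``{x0}"
    have Zs: "?Z \<subseteq> perms n" using R_in by blast
    have clos: "swap_adj w j \<in> ?Z" if w: "w \<in> ?Z" and j: "Suc j < n" and cr: "(w!j \<in> S) \<noteq> (w!Suc j \<in> S)" for w j
    proof (rule ccontr)
      assume ns: "swap_adj w j \<notin> ?Z"
      have wp: "w \<in> perms n" using w Zs by blast
      have lw: "length w = n" using perms_len[OF wp] .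
      have ne: "w!j \<noteq> w!Suc j" using cr by auto
      show False
      proof (cases "w!j < w!Suc j")
        case True
        then have u: "up n w j" using j unfolding up_def by simp
        have "okw x0 w j" unfolding okw_def using wp u w ns by simp
        then have "pr w j \<in> Ed x0" unfolding Ed_def by blast
        then show False using noc cr unfolding pr_def by simp
      next
        case False
        let ?w' = "swap_adj w j"
        have w'p: "?w' \<in> perms n" using swap_perms[OF wp j] .
        have vals: "?w'!j = w!Suc j" "?w'!Suc j = w!j" using swap_nth[of j w] j lw by auto
        have u: "up n ?w' j" using vals False ne j unfolding up_def by simp
        have ww: "swap_adj ?w' j = w" using swap_swap[of j w] j lw by simp
        have "okw x0 ?w' j" unfolding okw_def using w'p u w ns ww by simp
        then have "pr ?w' j \<in> Ed x0" unfolding Ed_def by blast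
        then show False using noc cr vals unfolding pr_def by simp
      qed
    qed
    obtain a where a: "1 \<le> a" "Suc a \<le> n" "(a \<in> S) \<noteq> (Suc a \<in> S)" using boundary[OF S] by blast
    have x0Z: "x0 \<in> ?Z" using R_refl x0 by blast
    have "a \<in> set x0" "Suc a \<in> set x0" using perms_set[OF x0] a by auto
    then obtain i0 j0 where ij0: "i0 < n" "j0 < n" "x0!i0 = a" "x0!j0 = Suc a"
      using perms_len[OF x0] by (metis in_set_conv_nth)
    have "i0 \<noteq> j0" using ij0 by auto
    then obtain i j where ij: "i < j" "j < n" "{x0!i, x0!j} = {a, Suc a}"
      using ij0 by (metis insert_commute linorder_neqE_nat)
    have crij: "(x0!i \<in> S) \<noteq> (x0!j \<in> S)" using ij(3) a(3) by (metis doubleton_eq_iff)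
    obtain w' m where wm: "w' \<in> ?Z" "Suc m < n"
      "(w'!m = x0!i \<and> w'!Suc m = x0!j) \<or> (w'!m = x0!j \<and> w'!Suc m = x0!i)"
      using move[OF Zs clos x0Z ij(1) ij(2) crij] by blast
    have w'p: "w' \<in> perms n" using wm(1) Zs by blast
    have lw': "length w' = n" using perms_len[OF w'p] .
    have vv: "(w'!m = a \<and> w'!Suc m = Suc a) \<or> (w'!m = Suc a \<and> w'!Suc m = a)"
      using wm(3) ij(3) by (metis doubleton_eq_iff)
    then show False
    proof
      assume v: "w'!m = a \<and> w'!Suc m = Suc a"
      have u: "up n w' m" using v wm(2) unfolding up_def by simp
      have "swap_adj w' m \<in> ?Z" using clos[OF wm(1) wm(2)] v a(3) by simp
      then have "(w', swap_adj w' m) \<in> R" using wm(1) R_sym R_trans by blast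
      then show False using consec_notR[OF w'p u] v by simp
    next
      assume v: "w'!m = Suc a \<and> w'!Suc m = a"
      let ?w2 = "swap_adj w' m"
      have w2Z: "?w2 \<in> ?Z" using clos[OF wm(1) wm(2)] v a(3) by simp
      have w2p: "?w2 \<in> perms n" using w2Z Zs by blast
      have vals: "?w2!m = a" "?w2!Suc m = Suc a" using swap_nth[of m w'] wm(2) lw' v by auto
      have u: "up n ?w2 m" using vals wm(2) unfolding up_def by simp
      have ww: "swap_adj ?w2 m = w'" using swap_swap[of m w'] wm(2) lw' by simp
      have "(?w2, swap_adj ?w2 m) \<in> R" using ww w2Z wm(1) R_sym R_trans by (metis Image_singleton_iff)
      then show False using consec_notR[OF w2p u] vals by simp
    qed
  qed
qed

lemma degree_ge: assumes X: "X \<in> perms n // R" shows "n - 1 \<le> qdegree n R X"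
proof -
  obtain x0 where x0: "x0 \<in> perms n" "X = R``{x0}" using quot_cls[OF X] by blast
  have "n \<le> card (Ed x0) + 1" using card_Ed_ge[OF x0(1)] by simp
  then show ?thesis using card_Ed_le[OF x0(1)] x0(2) by simp
qed

lemma degree_id: "qdegree n R (R``{idl n}) \<le> n - 1"
proof -
  let ?X = "R``{idl n}"
  let ?N = "{Y \<in> perms n // R. qadj n R ?X Y}"
  have "?N \<subseteq> (\<lambda>k. R``{swap_adj (idl n) k}) ` {..<n - 1}"
  proof
    fix Y assume Y: "Y \<in> ?N"
    then obtain y where y: "y \<in> perms n" "Y = R``{y}" using quot_cls by blast
    have adj: "qcover n R ?X Y \<or> qcover n R Y ?X" using Y unfolding qadj_def by blast
    have "\<not> qcover n R Y ?X"
    proof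
      assume qc: "qcover n R Y ?X"
      then have "qle n R (R``{y}) ?X" using y unfolding qcover_def by simp
      then have "(wjoin n y (idl n), idl n) \<in> R" using qle_iff[OF y(1) idl_perm] by simp
      moreover have "wjoin n y (idl n) = y" using J_le'[OF idl_perm y(1) idl_le] .
      ultimately have "R``{y} = ?X" using cls_eq_iff[OF y(1) idl_perm] by simp
      then show False using qc y unfolding qcover_def by simp
    qed
    then have qc: "qcover n R ?X (R``{y})" using adj y by simp
    then have ne: "?X \<noteq> R``{y}" unfolding qcover_def by simp
    then have "idl n \<noteq> y" by blast
    then obtain k where k: "up n (idl n) k" "weak_le (swap_adj (idl n) k) y"
      using exists_up[OF idl_perm y(1) idl_le] by blast
    let ?s = "swap_adj (idl n) k"
    have s: "?s \<in> perms n" using up_perm[OF idl_perm k(1)] .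
    have kn: "Suc k < n" using k(1) unfolding up_def by simp
    have q1: "qle n R ?X (R``{?s})" using qle_le[OF idl_perm s up_le[OF idl_perm k(1)]] .
    have q2: "qle n R (R``{?s}) (R``{y})" using qle_le[OF s y(1) k(2)] .
    have nbw: "\<not> (\<exists>Z\<in>perms n // R. Z \<noteq> ?X \<and> Z \<noteq> R``{y} \<and> qle n R ?X Z \<and> qle n R Z (R``{y}))"
      using qc unfolding qcover_def by (rule conjunct2[OF conjunct2])
    have "R``{?s} = ?X \<or> R``{?s} = R``{y}"
    proof (rule ccontr)
      assume h: "\<not> (R``{?s} = ?X \<or> R``{?s} = R``{y})"
      have n1: "R``{?s} \<noteq> ?X" using h by argo
      have n2: "R``{?s} \<noteq> R``{y}" using h by argo
      have "\<exists>Z\<in>perms n // R. Z \<noteq> ?X \<and> Z \<noteq> R``{y} \<and> qle n R ?X Z \<and> qle n R Z (R``{y})"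
        by (rule bexI[OF _ cls_in_quot[OF s]]) (intro conjI n1 n2 q1 q2)
      then show False by (rule notE[OF nbw])
    qed
    moreover have "R``{?s} \<noteq> ?X"
    proof
      assume "R``{?s} = ?X"
      then have "(?s, idl n) \<in> R" using cls_eq_iff[OF s idl_perm] by simp
      then show False using atom_notR[OF kn] R_sym by blast
    qed
    ultimately have "Y = R``{?s}" using y by simp
    then show "Y \<in> (\<lambda>k. R``{swap_adj (idl n) k}) ` {..<n - 1}" using kn by auto
  qed
  then have "card ?N \<le> card ((\<lambda>k. R``{swap_adj (idl n) k}) ` {..<n - 1})" by (rule card_mono[rotated]) simp
  also have "\<dots> \<le> n - 1" using card_image_le[of "{..<n - 1}"] by simp
  finally show ?thesis unfolding qdegree_def .
qed

lemma min_deg: "min_degree_Q n R = n - 1"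
  unfolding min_degree_Q_def
proof (rule Min_eqI)
  show "finite (qdegree n R ` (perms n // R))" using finite_quot by simp
  show "\<And>y. y \<in> qdegree n R ` (perms n // R) \<Longrightarrow> n - 1 \<le> y" using degree_ge by blast
  have X: "R``{idl n} \<in> perms n // R" using cls_in_quot[OF idl_perm] .
  have "qdegree n R (R``{idl n}) = n - 1" using degree_id degree_ge[OF X] by simp
  then show "n - 1 \<in> qdegree n R ` (perms n // R)" using X by (metis imageI)
qed

end

theorem mainTheorem12:
  fixes n :: nat and R :: "(nat list \<times> nat list) set"
  assumes "n \<ge> 1" and "lattice_congruence n R" and "essential n R"
  shows "min_degree_Q n R = n - 1"
proof -
  interpret LCE n R using assms(2,3) by unfold_locales
  show ?thesis by (rule min_deg)
qed



end
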